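(* Every Massouros hyperfield has the FETVINS property. That is: let $F$ be a Massouros hyperfield (as defined in the context). Then for all integers $k<n$ and every system of $k$ homogeneous linear equations over $F$ in the $n$ variables $x_1,\dots,x_n$, there exist values $x_1,\dots,x_n\in F$, not all equal to $0$, which satisfy all $k$ equations simultaneously.
   Context: A hyperaddition on a nonempty set $H$ is a map $+:H\times H\to\mathcal P^*(H)$ (nonempty subsets of $H$) that is commutative and associative, where for subsets $A,B$ one sets $A+B=\bigcup_{a\in A,b\in B}(a+b)$ and an element $x$ is identified with $\{x\}$. A hypergroup is a set with a hyperaddition having a unique $0$ with $0+h=\{h\}$ for all $h$, such that for each $x$ there is a unique $y=:-x$ with $0\in x+y$, and such that $x\in y+z$ implies $z\in x+(-y)$. A hyperfield is a set $F$ with a hyperaddition and a multiplication such that $(F,+)$ is a hypergroup, $(F,\cdot)$ is a monoid, $a(b+c)=ab+ac$, $r\cdot 0=0$ for all $r$, and $F\setminus\{0\}$ is a multiplicative group. Massouros hyperfield: let $G$ be an abelian group written multiplicatively, $H$ a group, and $\phi:G\to H$ a group homomorphism with $|\phi(G)|\ge 3$. Let $F=G\cup\{0\}$, with multiplication that of $G$ extended by $0\cdot x=x\cdot 0=0$ for all $x\in F$, and equipped with a hyperaddition making $F$ a hyperfield. $F$ is called Massouros (with respect to $\phi$) if: (1) $\phi(-x)=\phi(x)$ for all $x\in G$; (2) for all $x,y\in G$ with $\phi(x)=\phi(y)$ one has $G\setminus\phi^{-1}(\phi(x))\subseteq x+y$; (3) for all $x,y\in G$ with $\phi(x)\ne\phi(y)$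 one has $\phi^{-1}(\{\phi(x),\phi(y)\})\subseteq x+y$. A homogeneous linear equation over $F$ is a statement $a_1x_1+a_2x_2+\cdots+a_mx_m\ni 0$ with nonzero coefficients $a_i\in F$ (terms with zero coefficient are omitted); values of the variables in $F$ satisfy it if $0$ belongs to the (set-valued) sum. *)

theory Defs
  imports "HOL-Algebra.Group"
begin

definition setplus :: "('a \<Rightarrow> 'a \<Rightarrow> 'a set) \<Rightarrow> 'a set \<Rightarrow> 'a set \<Rightarrow> 'a set" where
  "setplus hadd A B = (\<Union>a\<in>A. \<Union>b\<in>B. hadd a b)"

definition hyperaddition :: "'a set \<Rightarrow> ('a \<Rightarrow> 'a \<Rightarrow> 'a set) \<Rightarrow> bool" where
  "hyperaddition R hadd \<longleftrightarrow>
     R \<noteq> {} \<and>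
     (\<forall>x\<in>R. \<forall>y\<in>R. hadd x y \<subseteq> R \<and> hadd x y \<noteq> {}) \<and>
     (\<forall>x\<in>R. \<forall>y\<in>R. hadd x y = hadd y x) \<and>
     (\<forall>x\<in>R. \<forall>y\<in>R. \<forall>z\<in>R. setplus hadd (hadd x y) {z} = setplus hadd {x} (hadd y z))"

definition hneg :: "'a set \<Rightarrow> ('a \<Rightarrow> 'a \<Rightarrow> 'a set) \<Rightarrow> 'a \<Rightarrow> 'a \<Rightarrow> 'a" where
  "hneg R hadd zero x = (THE y. y \<in> R \<and> zero \<in> hadd x y)"

definition hypergroup :: "'a set \<Rightarrow> ('a \<Rightarrow> 'a \<Rightarrow> 'a set) \<Rightarrow> 'a \<Rightarrow> bool" where
  "hypergroup R hadd zero \<longleftrightarrow>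
     hyperaddition R hadd \<and>
     zero \<in> R \<and>
     (\<forall>h\<in>R. hadd zero h = {h}) \<and>
     (\<forall>z'\<in>R. (\<forall>h\<in>R. hadd z' h = {h}) \<longrightarrow> z' = zero) \<and>
     (\<forall>x\<in>R. \<exists>!y. y \<in> R \<and> zero \<in> hadd x y) \<and>
     (\<forall>x\<in>R. \<forall>y\<in>R. \<forall>z\<in>R. x \<in> hadd y z \<longrightarrow> z \<in> hadd x (hneg R hadd zero y))"

definition mult_group :: "'a set \<Rightarrow> ('a \<Rightarrow> 'a \<Rightarrow> 'a) \<Rightarrow> 'a \<Rightarrow> 'a \<Rightarrow> 'a monoid" where
  "mult_group R hmul zero unit = \<lparr>carrier = R - {zero}, mult = hmul, one = unit\<rparr>"

definition hyperfield ::
  "'a set \<Rightarrow> ('a \<Rightarrow> 'a \<Rightarrow> 'a set) \<Rightarrow> ('a \<Rightarrow> 'a \<Rightarrow> 'a) \<Rightarrow> 'a \<Rightarrow> 'a \<Rightarrow> bool" where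
  "hyperfield R hadd hmul zero unit \<longleftrightarrow>
     hypergroup R hadd zero \<and>
     \<comment> \<open>(R, hmul) is a monoid with unit element unit\<close>
     (\<forall>x\<in>R. \<forall>y\<in>R. hmul x y \<in> R) \<and>
     (\<forall>x\<in>R. \<forall>y\<in>R. \<forall>z\<in>R. hmul (hmul x y) z = hmul x (hmul y z)) \<and>
     unit \<in> R \<and> (\<forall>x\<in>R. hmul unit x = x \<and> hmul x unit = x) \<and>
     \<comment> \<open>distributivity a(b+c) = ab + ac\<close>
     (\<forall>a\<in>R. \<forall>b\<in>R. \<forall>c\<in>R. hmul a ` hadd b c = hadd (hmul a b) (hmul a c)) \<and>
     (\<forall>r\<in>R. hmul r zero = zero) \<and>
     group (mult_group R hmul zero unit)"

definition massouros ::
  "'a set \<Rightarrow> ('a \<Rightarrow> 'a \<Rightarrow> 'a set) \<Rightarrow> ('a \<Rightarrow> 'a \<Rightarrow> 'a) \<Rightarrow> 'a \<Rightarrow> 'a \<Rightarrow>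
   ('b, 'c) monoid_scheme \<Rightarrow> ('a \<Rightarrow> 'b) \<Rightarrow> bool" where
  "massouros R hadd hmul zero unit H phi \<longleftrightarrow>
     (let G = R - {zero} in
       hyperfield R hadd hmul zero unit \<and>
       comm_group (mult_group R hmul zero unit) \<and>
       group H \<and>
       phi \<in> hom (mult_group R hmul zero unit) H \<and>
       (\<exists>a b c. a \<in> phi ` G \<and> b \<in> phi ` G \<and> c \<in> phi ` G \<and> a \<noteq> b \<and> a \<noteq> c \<and> b \<noteq> c) \<and>
       (\<forall>x\<in>R. hmul zero x = zero \<and> hmul x zero = zero) \<and>
       (\<forall>x\<in>G. phi (hneg R hadd zero x) = phi x) \<and>
       (\<forall>x\<in>G. \<forall>y\<in>G. phi x = phi y \<longrightarrow>
           G - {g\<in>G. phi g = phi x} \<subseteq> hadd x y) \<and>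
       (\<forall>x\<in>G. \<forall>y\<in>G. phi x \<noteq> phi y \<longrightarrow>
           {g\<in>G. phi g = phi x \<or> phi g = phi y} \<subseteq> hadd x y))"

fun hsum :: "('a \<Rightarrow> 'a \<Rightarrow> 'a set) \<Rightarrow> 'a \<Rightarrow> 'a list \<Rightarrow> 'a set" where
  "hsum hadd zero [] = {zero}"
| "hsum hadd zero (x # xs) = setplus hadd {x} (hsum hadd zero xs)"

definition lin_form ::
  "('a \<Rightarrow> 'a \<Rightarrow> 'a set) \<Rightarrow> ('a \<Rightarrow> 'a \<Rightarrow> 'a) \<Rightarrow> 'a \<Rightarrow> nat \<Rightarrow> (nat \<Rightarrow> 'a) \<Rightarrow> (nat \<Rightarrow> 'a) \<Rightarrow> 'a set" where
  "lin_form hadd hmul zero n a x =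
     hsum hadd zero (map (\<lambda>i. hmul (a i) (x i)) (filter (\<lambda>i. a i \<noteq> zero) [0..<n]))"

definition FETVINS ::
  "'a set \<Rightarrow> ('a \<Rightarrow> 'a \<Rightarrow> 'a set) \<Rightarrow> ('a \<Rightarrow> 'a \<Rightarrow> 'a) \<Rightarrow> 'a \<Rightarrow> bool" where
  "FETVINS R hadd hmul zero \<longleftrightarrow>
     (\<forall>k n (A :: nat \<Rightarrow> nat \<Rightarrow> 'a). k < n \<longrightarrow> (\<forall>j<k. \<forall>i<n. A j i \<in> R) \<longrightarrow>
        (\<exists>x. (\<forall>i<n. x i \<in> R) \<and> (\<exists>i<n. x i \<noteq> zero) \<and>
             (\<forall>j<k. zero \<in> lin_form hadd hmul zero n (A j) x)))"

end

theory Submission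
  imports Defs "HOL-Library.Multiset"
begin

locale mh =
  fixes R :: "'a set" and hadd :: "'a \<Rightarrow> 'a \<Rightarrow> 'a set" and hmul :: "'a \<Rightarrow> 'a \<Rightarrow> 'a"
    and zero unit :: 'a and H :: "('b, 'c) monoid_scheme" and phi :: "'a \<Rightarrow> 'b"
  assumes M: "massouros R hadd hmul zero unit H phi"
begin

abbreviation "G \<equiv> R - {zero}"
abbreviation "sp \<equiv> setplus hadd"
definition "neg x = hneg R hadd zero x"

lemma MM: "hyperfield R hadd hmul zero unit \<and>
       comm_group (mult_group R hmul zero unit) \<and>
       group H \<and>
       phi \<in> hom (mult_group R hmul zero unit) H \<and>
       (\<exists>a b c. a \<in> phi ` G \<and> b \<in> phi ` G \<and> c \<in> phi ` G \<and> a \<noteq> b \<and> a \<noteq> c \<and> b \<noteq> c) \<and>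
       (\<forall>x\<in>R. hmul zero x = zero \<and> hmul x zero = zero) \<and>
       (\<forall>x\<in>G. phi (hneg R hadd zero x) = phi x) \<and>
       (\<forall>x\<in>G. \<forall>y\<in>G. phi x = phi y \<longrightarrow>
           G - {g\<in>G. phi g = phi x} \<subseteq> hadd x y) \<and>
       (\<forall>x\<in>G. \<forall>y\<in>G. phi x \<noteq> phi y \<longrightarrow>
           {g\<in>G. phi g = phi x \<or> phi g = phi y} \<subseteq> hadd x y)"
  using M unfolding massouros_def Let_def .

lemma hf: "hyperfield R hadd hmul zero unit" using MM by (elim conjE)
lemma HF: "hypergroup R hadd zero \<and>
     (\<forall>x\<in>R. \<forall>y\<in>R. hmul x y \<in> R) \<and>
     (\<forall>x\<in>R. \<forall>y\<in>R. \<forall>z\<in>R. hmul (hmul x y) z = hmul x (hmul y z)) \<and>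
     unit \<in> R \<and> (\<forall>x\<in>R. hmul unit x = x \<and> hmul x unit = x) \<and>
     (\<forall>a\<in>R. \<forall>b\<in>R. \<forall>c\<in>R. hmul a ` hadd b c = hadd (hmul a b) (hmul a c)) \<and>
     (\<forall>r\<in>R. hmul r zero = zero) \<and>
     group (mult_group R hmul zero unit)" using hf unfolding hyperfield_def .
lemma hg: "hypergroup R hadd zero" using HF by (elim conjE)
lemma HG: "hyperaddition R hadd \<and>
     zero \<in> R \<and>
     (\<forall>h\<in>R. hadd zero h = {h}) \<and>
     (\<forall>z'\<in>R. (\<forall>h\<in>R. hadd z' h = {h}) \<longrightarrow> z' = zero) \<and>
     (\<forall>x\<in>R. \<exists>!y. y \<in> R \<and> zero \<in> hadd x y) \<and>
     (\<forall>x\<in>R. \<forall>y\<in>R. \<forall>z\<in>R. x \<in> hadd y z \<longrightarrow> z \<in> hadd x (hneg R hadd zero y))"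
  using hg unfolding hypergroup_def .
lemma HA: "R \<noteq> {} \<and>
     (\<forall>x\<in>R. \<forall>y\<in>R. hadd x y \<subseteq> R \<and> hadd x y \<noteq> {}) \<and>
     (\<forall>x\<in>R. \<forall>y\<in>R. hadd x y = hadd y x) \<and>
     (\<forall>x\<in>R. \<forall>y\<in>R. \<forall>z\<in>R. setplus hadd (hadd x y) {z} = setplus hadd {x} (hadd y z))"
  using HG[THEN conjunct1] unfolding hyperaddition_def .

lemma add_closed: "x \<in> R \<Longrightarrow> y \<in> R \<Longrightarrow> hadd x y \<subseteq> R" using HA[THEN conjunct2, THEN conjunct1, rule_format] by simp
lemma add_ne: "x \<in> R \<Longrightarrow> y \<in> R \<Longrightarrow> hadd x y \<noteq> {}" using HA[THEN conjunct2, THEN conjunct1, rule_format] by simp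
lemma add_comm: "x \<in> R \<Longrightarrow> y \<in> R \<Longrightarrow> hadd x y = hadd y x" using HA[THEN conjunct2, THEN conjunct2, THEN conjunct1, rule_format] by simp
lemma add_assoc: "x \<in> R \<Longrightarrow> y \<in> R \<Longrightarrow> z \<in> R \<Longrightarrow> sp (hadd x y) {z} = sp {x} (hadd y z)"
  using HA[THEN conjunct2, THEN conjunct2, THEN conjunct2, rule_format] by simp
lemma zero_in[simp]: "zero \<in> R" using HG[THEN conjunct2, THEN conjunct1] .
lemma zero_add: "h \<in> R \<Longrightarrow> hadd zero h = {h}" using HG[THEN conjunct2, THEN conjunct2, THEN conjunct1, rule_format] by simp
lemma add_zero: "h \<in> R \<Longrightarrow> hadd h zero = {h}" using zero_add add_comm by simp
lemma inv_ex1: "x \<in> R \<Longrightarrow> \<exists>!y. y \<in> R \<and> zero \<in> hadd x y" using HG[THEN conjunct2, THEN conjunct2, THEN conjunct2, THEN conjunct2, THEN conjunct1, rule_format] by simp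

lemma neg_prop: "x \<in> R \<Longrightarrow> neg x \<in> R \<and> zero \<in> hadd x (neg x)"
  unfolding neg_def hneg_def by (rule theI', erule inv_ex1)
lemma neg_in[simp]: "x \<in> R \<Longrightarrow> neg x \<in> R" using neg_prop by blast
lemma neg_zero_in: "x \<in> R \<Longrightarrow> zero \<in> hadd x (neg x)" using neg_prop by blast
lemma neg_unique: "x \<in> R \<Longrightarrow> y \<in> R \<Longrightarrow> zero \<in> hadd x y \<Longrightarrow> y = neg x"
  using inv_ex1[of x] neg_prop[of x] by blast
lemma neg_neg[simp]: "x \<in> R \<Longrightarrow> neg (neg x) = x"
  using neg_unique[of "neg x" x] neg_prop[of x] add_comm[of x "neg x"] by simp
lemma neg_zero[simp]: "neg zero = zero"
  using neg_unique[of zero zero] zero_add[of zero] by simp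
lemma neg_eq_zero_iff: "x \<in> R \<Longrightarrow> (neg x = zero) = (x = zero)"
  by (metis neg_neg neg_zero)
lemma neg_inj: "x \<in> R \<Longrightarrow> y \<in> R \<Longrightarrow> neg x = neg y \<Longrightarrow> x = y"
  by (metis neg_neg)

lemma mul_closed[simp]: "x \<in> R \<Longrightarrow> y \<in> R \<Longrightarrow> hmul x y \<in> R" using HF[THEN conjunct2, THEN conjunct1, rule_format] by simp
lemma mul_assoc: "x \<in> R \<Longrightarrow> y \<in> R \<Longrightarrow> z \<in> R \<Longrightarrow> hmul (hmul x y) z = hmul x (hmul y z)"
  using HF[THEN conjunct2, THEN conjunct2, THEN conjunct1, rule_format] by simp
lemma unit_in[simp]: "unit \<in> R" using HF[THEN conjunct2, THEN conjunct2, THEN conjunct2, THEN conjunct1] .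
lemma unit_mul[simp]: "x \<in> R \<Longrightarrow> hmul unit x = x" using HF[THEN conjunct2, THEN conjunct2, THEN conjunct2, THEN conjunct2, THEN conjunct1, rule_format] by simp
lemma mul_unit[simp]: "x \<in> R \<Longrightarrow> hmul x unit = x" using HF[THEN conjunct2, THEN conjunct2, THEN conjunct2, THEN conjunct2, THEN conjunct1, rule_format] by simp
lemma distrib: "a \<in> R \<Longrightarrow> b \<in> R \<Longrightarrow> c \<in> R \<Longrightarrow> hmul a ` hadd b c = hadd (hmul a b) (hmul a c)"
  using HF[THEN conjunct2, THEN conjunct2, THEN conjunct2, THEN conjunct2, THEN conjunct2, THEN conjunct1, rule_format] by simp
lemma mul_zero[simp]: "r \<in> R \<Longrightarrow> hmul r zero = zero" using HF[THEN conjunct2, THEN conjunct2, THEN conjunct2, THEN conjunct2, THEN conjunct2, THEN conjunct2, THEN conjunct1, rule_format] by simp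
lemma zero_mul[simp]: "r \<in> R \<Longrightarrow> hmul zero r = zero" using MM[THEN conjunct2, THEN conjunct2, THEN conjunct2, THEN conjunct2, THEN conjunct2, THEN conjunct1, rule_format] by simp

lemma grp: "group (mult_group R hmul zero unit)" using HF by (elim conjE)
lemma cgrp: "comm_group (mult_group R hmul zero unit)" using MM by (elim conjE)
lemma hom: "phi \<in> hom (mult_group R hmul zero unit) H" using MM by (elim conjE)
lemma grpH: "group H" using MM by (elim conjE)
lemma three: "\<exists>a b c. a \<in> phi ` G \<and> b \<in> phi ` G \<and> c \<in> phi ` G \<and> a \<noteq> b \<and> a \<noteq> c \<and> b \<noteq> c"
  using MM by (elim conjE)
lemma phi_neg: "x \<in> G \<Longrightarrow> phi (neg x) = phi x" using MM[THEN conjunct2, THEN conjunct2, THEN conjunct2, THEN conjunct2, THEN conjunct2, THEN conjunct2, THEN conjunct1, rule_format] unfolding neg_def by simp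
lemma mass2: "x \<in> G \<Longrightarrow> y \<in> G \<Longrightarrow> phi x = phi y \<Longrightarrow> g \<in> G \<Longrightarrow> phi g \<noteq> phi x \<Longrightarrow> g \<in> hadd x y"
  using MM[THEN conjunct2, THEN conjunct2, THEN conjunct2, THEN conjunct2, THEN conjunct2, THEN conjunct2, THEN conjunct2, THEN conjunct1, rule_format, of x y] by auto
lemma mass3: "x \<in> G \<Longrightarrow> y \<in> G \<Longrightarrow> phi x \<noteq> phi y \<Longrightarrow> g \<in> G \<Longrightarrow> phi g = phi x \<or> phi g = phi y \<Longrightarrow> g \<in> hadd x y"
  using MM[THEN conjunct2, THEN conjunct2, THEN conjunct2, THEN conjunct2, THEN conjunct2, THEN conjunct2, THEN conjunct2, THEN conjunct2, rule_format, of x y] by auto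

lemma mg_simps: "carrier (mult_group R hmul zero unit) = G" "monoid.mult (mult_group R hmul zero unit) = hmul"
  "one (mult_group R hmul zero unit) = unit"
  unfolding mult_group_def by simp_all

lemma mulG[simp]: "x \<in> G \<Longrightarrow> y \<in> G \<Longrightarrow> hmul x y \<in> G"
  using monoid.m_closed[OF group.is_monoid[OF grp], of x y] by (simp add: mg_simps)
lemma unitG[simp]: "unit \<in> G"
  using monoid.one_closed[OF group.is_monoid[OF grp]] by (simp add: mg_simps)
lemma mul_comm: "x \<in> R \<Longrightarrow> y \<in> R \<Longrightarrow> hmul x y = hmul y x"
proof -
  assume x: "x \<in> R" and y: "y \<in> R"
  show ?thesis
  proof (cases "x = zero \<or> y = zero")
    case True then show ?thesis using x y by auto
  next
    case False
    then have "x \<in> G" "y \<in> G" using x y by auto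
    then show ?thesis using comm_monoid.m_comm[OF comm_group.axioms(1)[OF cgrp], of x y] by (simp add: mg_simps)
  qed
qed
lemma inv_ex: "x \<in> G \<Longrightarrow> \<exists>y\<in>G. hmul x y = unit"
  using group.r_inv_ex[OF grp, of x] by (auto simp add: mg_simps)

definition "minv x = (SOME y. y \<in> G \<and> hmul x y = unit)"
lemma minv: "x \<in> G \<Longrightarrow> minv x \<in> G \<and> hmul x (minv x) = unit"
  unfolding minv_def using inv_ex[of x] by (metis (mono_tags, lifting) someI_ex)

lemma mul_nz: "x \<in> R \<Longrightarrow> y \<in> R \<Longrightarrow> (hmul x y = zero) = (x = zero \<or> y = zero)"
  using mulG by auto

lemma phi_mul: "x \<in> G \<Longrightarrow> y \<in> G \<Longrightarrow> phi (hmul x y) = phi x \<otimes>\<^bsub>H\<^esub> phi y"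
  using hom unfolding hom_def mg_simps by simp
lemma phi_car: "x \<in> G \<Longrightarrow> phi x \<in> carrier H"
  using hom unfolding hom_def mg_simps by auto

end

context mh begin

lemma sp_sing[simp]: "sp {x} {y} = hadd x y" unfolding setplus_def by simp

lemma sp_closed: "A \<subseteq> R \<Longrightarrow> B \<subseteq> R \<Longrightarrow> sp A B \<subseteq> R"
  unfolding setplus_def using add_closed by (meson UN_least subsetD)

lemma sp_ne: "A \<subseteq> R \<Longrightarrow> B \<subseteq> R \<Longrightarrow> A \<noteq> {} \<Longrightarrow> B \<noteq> {} \<Longrightarrow> sp A B \<noteq> {}"
proof -
  assume a: "A \<subseteq> R" "B \<subseteq> R" "A \<noteq> {}" "B \<noteq> {}"
  then obtain x y where "x \<in> A" "y \<in> B" by blast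
  moreover then have "hadd x y \<noteq> {}" using a add_ne by blast
  ultimately show ?thesis unfolding setplus_def by blast
qed

lemma sp_mono: "A \<subseteq> A' \<Longrightarrow> B \<subseteq> B' \<Longrightarrow> sp A B \<subseteq> sp A' B'"
  unfolding setplus_def by blast

lemma sp_comm: "A \<subseteq> R \<Longrightarrow> B \<subseteq> R \<Longrightarrow> sp A B = sp B A"
proof -
  assume a: "A \<subseteq> R" "B \<subseteq> R"
  have "\<And>x y. x \<in> A \<Longrightarrow> y \<in> B \<Longrightarrow> hadd x y = hadd y x" using a add_comm by blast
  then show ?thesis unfolding setplus_def by blast
qed

lemma sp_zero: "A \<subseteq> R \<Longrightarrow> sp {zero} A = A"
proof -
  assume a: "A \<subseteq> R"
  have "\<And>x. x \<in> A \<Longrightarrow> hadd zero x = {x}" using a zero_add by blast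
  then show ?thesis unfolding setplus_def by simp
qed

lemma sp_zero2: "A \<subseteq> R \<Longrightarrow> sp A {zero} = A"
  using sp_zero sp_comm[of A "{zero}"] by simp

lemma sp_assoc: assumes "A \<subseteq> R" "B \<subseteq> R" "C \<subseteq> R"
  shows "sp (sp A B) C = sp A (sp B C)"
proof -
  have 1: "sp (sp A B) C = (\<Union>a\<in>A. \<Union>b\<in>B. \<Union>c\<in>C. sp (hadd a b) {c})"
    unfolding setplus_def by blast
  have 2: "sp A (sp B C) = (\<Union>a\<in>A. \<Union>b\<in>B. \<Union>c\<in>C. sp {a} (hadd b c))"
    unfolding setplus_def by blast
  have 3: "\<And>a b c. a \<in> A \<Longrightarrow> b \<in> B \<Longrightarrow> c \<in> C \<Longrightarrow> sp (hadd a b) {c} = sp {a} (hadd b c)"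
    using assms add_assoc by blast
  show ?thesis unfolding 1 2 using 3 by (intro SUP_cong refl) auto
qed

lemma sp_lcomm: assumes "A \<subseteq> R" "B \<subseteq> R" "C \<subseteq> R"
  shows "sp A (sp B C) = sp B (sp A C)"
proof -
  have "sp A (sp B C) = sp (sp A B) C" using sp_assoc assms by simp
  also have "\<dots> = sp (sp B A) C" using sp_comm assms by simp
  also have "\<dots> = sp B (sp A C)" using sp_assoc assms by simp
  finally show ?thesis .
qed

abbreviation "hs L \<equiv> hsum hadd zero L"

lemma hs_closed: "set L \<subseteq> R \<Longrightarrow> hs L \<subseteq> R"
proof (induction L)
  case Nil then show ?case by simp
next
  case (Cons a L) then show ?case using sp_closed[of "{a}" "hs L"] by simp
qed

lemma hs_ne: "set L \<subseteq> R \<Longrightarrow> hs L \<noteq> {}"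
proof (induction L)
  case Nil then show ?case by simp
next
  case (Cons a L) then show ?case using sp_ne[of "{a}" "hs L"] hs_closed[of L] by simp
qed

lemma hs_append: "set L1 \<subseteq> R \<Longrightarrow> set L2 \<subseteq> R \<Longrightarrow> hs (L1 @ L2) = sp (hs L1) (hs L2)"
proof (induction L1)
  case Nil then show ?case by (simp add: sp_zero hs_closed)
next
  case (Cons a L1)
  then show ?case by (simp add: sp_assoc hs_closed)
qed

lemma hs_perm: "mset L1 = mset L2 \<Longrightarrow> set L1 \<subseteq> R \<Longrightarrow> hs L1 = hs L2"
proof (induction L1 arbitrary: L2)
  case Nil then have "L2 = []" by (cases L2) auto
  then show ?case by simp
next
  case (Cons a L1)
  have "a \<in> set L2" using Cons.prems(1) by (metis list.set_intros(1) set_mset_mset)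
  then obtain xs ys where L2: "L2 = xs @ a # ys" by (meson split_list)
  have m: "mset L1 = mset (xs @ ys)" using Cons.prems(1) L2 by simp
  have sL2: "set L2 = set (a # L1)" using Cons.prems(1) by (metis set_mset_mset)
  then have R: "set xs \<subseteq> R" "set ys \<subseteq> R" "a \<in> R" "set L1 \<subseteq> R" using Cons.prems(2) L2 by auto
  have "hs L2 = sp (hs xs) (sp {a} (hs ys))" using L2 R by (simp add: hs_append)
  also have "\<dots> = sp {a} (sp (hs xs) (hs ys))" using R by (simp add: sp_lcomm hs_closed)
  also have "\<dots> = sp {a} (hs (xs @ ys))" using R by (simp add: hs_append)
  also have "\<dots> = sp {a} (hs L1)" using Cons.IH[OF m] R by simp
  finally show ?case by simp
qed

lemma hs_scale: "c \<in> R \<Longrightarrow> set L \<subseteq> R \<Longrightarrow> hmul c ` hs L = hs (map (hmul c) L)"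
proof (induction L)
  case Nil then show ?case by simp
next
  case (Cons a L)
  have "hmul c ` sp {a} (hs L) = (\<Union>x\<in>hs L. hmul c ` hadd a x)" unfolding setplus_def by auto
  also have "\<dots> = (\<Union>x\<in>hs L. hadd (hmul c a) (hmul c x))"
    using Cons.prems hs_closed[of L] by (intro SUP_cong refl distrib) auto
  also have "\<dots> = sp {hmul c a} (hmul c ` hs L)" unfolding setplus_def by auto
  finally show ?case using Cons by simp
qed

definition ssum :: "(nat \<Rightarrow> 'a) \<Rightarrow> nat set \<Rightarrow> 'a set" where
  "ssum f C = hs (map f (sorted_list_of_set C))"

lemma ss_closed: "finite C \<Longrightarrow> f ` C \<subseteq> R \<Longrightarrow> ssum f C \<subseteq> R"
  unfolding ssum_def by (rule hs_closed) auto

lemma ss_ne: "finite C \<Longrightarrow> f ` C \<subseteq> R \<Longrightarrow> ssum f C \<noteq> {}"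
  unfolding ssum_def by (rule hs_ne) auto

lemma ss_empty[simp]: "ssum f {} = {zero}" unfolding ssum_def by simp

lemma msl: "mset (sorted_list_of_set A) = mset_set A"
  by (metis mset_sorted_list_of_multiset sorted_list_of_mset_set)

lemma ss_list: "distinct xs \<Longrightarrow> f ` set xs \<subseteq> R \<Longrightarrow> hs (map f xs) = ssum f (set xs)"
  unfolding ssum_def
  by (rule hs_perm) (auto simp: mset_set_set msl)

lemma ss_insert: assumes "finite C" "a \<notin> C" "f ` insert a C \<subseteq> R"
  shows "ssum f (insert a C) = sp {f a} (ssum f C)"
proof -
  have "ssum f (insert a C) = hs (map f (a # sorted_list_of_set C))"
    unfolding ssum_def using assms
    by (intro hs_perm) (auto simp: set_insort_key)
  then show ?thesis unfolding ssum_def by simp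
qed

lemma ss_cong: "finite C \<Longrightarrow> (\<And>i. i \<in> C \<Longrightarrow> f i = g i) \<Longrightarrow> ssum f C = ssum g C"
  unfolding ssum_def by (metis map_eq_conv set_sorted_list_of_set)

lemma ss_union: assumes "finite A" "finite B" "A \<inter> B = {}" "f ` (A \<union> B) \<subseteq> R"
  shows "ssum f (A \<union> B) = sp (ssum f A) (ssum f B)"
  using assms
proof (induction A rule: finite_induct)
  case empty then show ?case by (simp add: sp_zero ss_closed)
next
  case (insert a A)
  have "ssum f (insert a A \<union> B) = ssum f (insert a (A \<union> B))" by simp
  also have "\<dots> = sp {f a} (ssum f (A \<union> B))"
    using insert by (intro ss_insert) auto
  also have "\<dots> = sp {f a} (sp (ssum f A) (ssum f B))" using insert by auto
  also have "\<dots> = sp (sp {f a} (ssum f A)) (ssum f B)"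
    using insert by (intro sp_assoc[symmetric] ss_closed) auto
  also have "\<dots> = sp (ssum f (insert a A)) (ssum f B)"
    using insert by (subst ss_insert) auto
  finally show ?case .
qed

lemma ss_allzero: "finite C \<Longrightarrow> (\<And>i. i \<in> C \<Longrightarrow> f i = zero) \<Longrightarrow> ssum f C = {zero}"
proof (induction C rule: finite_induct)
  case empty then show ?case by simp
next
  case (insert a C)
  then show ?case by (subst ss_insert) (auto simp: zero_add)
qed

lemma ss_zero_terms: assumes "finite C" "D \<subseteq> C" "\<And>i. i \<in> C - D \<Longrightarrow> f i = zero" "f ` C \<subseteq> R"
  shows "ssum f C = ssum f D"
proof -
  have fD: "finite D" using assms finite_subset by blast
  have "C = D \<union> (C - D)" using assms by blast
  then have "ssum f C = sp (ssum f D) (ssum f (C - D))"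
    using assms fD by (metis Diff_disjoint finite_Diff ss_union)
  also have "ssum f (C - D) = {zero}" using assms by (intro ss_allzero) auto
  moreover have "ssum f D \<subseteq> R" using fD assms by (intro ss_closed) auto
  ultimately show ?thesis by (simp add: sp_zero2)
qed

lemma ss_scale: "finite C \<Longrightarrow> c \<in> R \<Longrightarrow> f ` C \<subseteq> R \<Longrightarrow> hmul c ` ssum f C = ssum (\<lambda>i. hmul c (f i)) C"
  unfolding ssum_def by (subst hs_scale) (auto simp: comp_def)

lemma ss_single: "f a \<in> R \<Longrightarrow> ssum f {a} = {f a}"
  by (subst ss_insert) (auto simp: add_zero)

lemma ss_two: "a \<noteq> b \<Longrightarrow> f a \<in> R \<Longrightarrow> f b \<in> R \<Longrightarrow> ssum f {a, b} = hadd (f a) (f b)"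
  by (subst ss_insert) (auto simp: ss_single)

end

context mh begin

lemma neg_mul: assumes "a \<in> R" "b \<in> R" shows "hmul (neg a) b = neg (hmul a b)"
proof -
  have "zero \<in> hadd a (neg a)" using assms neg_zero_in by blast
  then have "hmul b zero \<in> hmul b ` hadd a (neg a)" by blast
  then have "zero \<in> hadd (hmul b a) (hmul b (neg a))" using assms distrib[of b a "neg a"] by simp
  then have "hmul b (neg a) = neg (hmul b a)" using assms by (intro neg_unique) auto
  then show ?thesis using assms mul_comm by simp
qed

lemma negG: "x \<in> G \<Longrightarrow> neg x \<in> G" using neg_eq_zero_iff by auto

lemma avoid2: "\<exists>g\<in>G. phi g \<noteq> c \<and> phi g \<noteq> d"
proof -
  obtain a b e where "a \<in> phi ` G" "b \<in> phi ` G" "e \<in> phi ` G" "a \<noteq> b" "a \<noteq> e" "b \<noteq> e"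
    using three by blast
  then show ?thesis by (metis imageE)
qed

lemma pick_ex: assumes "p \<in> R" "q \<in> R"
  shows "\<exists>b. b \<in> hadd p q \<and> (b = zero \<longrightarrow> p = zero \<and> q = zero)"
proof (cases "p = zero")
  case True then show ?thesis using assms zero_add by auto
next
  case pz: False
  show ?thesis
  proof (cases "q = zero")
    case True then show ?thesis using assms add_zero by auto
  next
    case qz: False
    show ?thesis
    proof (cases "phi p = phi q")
      case True
      obtain g where g: "g \<in> G" "phi g \<noteq> phi p" using avoid2 by blast
      then have "g \<in> hadd p q" using mass2[of p q g] True assms pz qz by auto
      then show ?thesis using g by auto
    next
      case False
      then have "p \<in> hadd p q" using mass3[of p q p] assms pz qz by auto
      then show ?thesis using pz by auto
    qed
  qed
qed

definition "pick p q = (SOME b. b \<in> hadd p q \<and> (b = zero \<longrightarrow> p = zero \<and> q = zero))"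

lemma pick: assumes "p \<in> R" "q \<in> R"
  shows "pick p q \<in> hadd p q" "pick p q = zero \<longleftrightarrow> p = zero \<and> q = zero"
proof -
  have *: "pick p q \<in> hadd p q \<and> (pick p q = zero \<longrightarrow> p = zero \<and> q = zero)"
    unfolding pick_def using pick_ex[OF assms] by (rule someI_ex)
  then show "pick p q \<in> hadd p q" by blast
  show "pick p q = zero \<longleftrightarrow> p = zero \<and> q = zero"
  proof
    assume "pick p q = zero" then show "p = zero \<and> q = zero" using * by blast
  next
    assume "p = zero \<and> q = zero"
    then show "pick p q = zero" using * zero_add[of zero] by auto
  qed
qed

lemma pickR: "p \<in> R \<Longrightarrow> q \<in> R \<Longrightarrow> pick p q \<in> R"
  using pick(1) add_closed by blast

lemma exact_pair: "t \<in> G \<Longrightarrow> g \<in> G \<Longrightarrow> phi g \<noteq> phi t \<Longrightarrow> g \<in> hadd t (neg t)"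
  using mass2[of t "neg t" g] phi_neg[of t] negG[of t] by auto

lemma L2: "finite D \<Longrightarrow> 2 \<le> card D \<Longrightarrow> (\<forall>i\<in>D. f i \<in> G) \<Longrightarrow> \<forall>c. \<exists>z\<in>ssum f D. z \<in> G \<and> phi z \<noteq> c"
proof (induction D rule: finite_induct)
  case empty then show ?case by simp
next
  case (insert a D)
  have cD: "1 \<le> card D" using insert by simp
  have fa: "f a \<in> G" using insert by simp
  have fD: "\<forall>i\<in>D. f i \<in> G" using insert by simp
  show ?case
  proof
    fix c
    show "\<exists>z\<in>ssum f (insert a D). z \<in> G \<and> phi z \<noteq> c"
    proof (cases "card D = 1")
      case True
      then obtain b where D: "D = {b}" by (meson card_1_singletonE)
      then have ab: "a \<noteq> b" using insert by auto
      have fb: "f b \<in> G" using D fD by simp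
      have ss: "ssum f (insert a D) = hadd (f a) (f b)" using D ab fa fb ss_two[of a b f] by auto
      show ?thesis
      proof (cases "phi (f a) = phi (f b)")
        case True
        obtain g where g: "g \<in> G" "phi g \<noteq> c" "phi g \<noteq> phi (f a)" using avoid2 by blast
        then have "g \<in> hadd (f a) (f b)" using mass2[of "f a" "f b" g] True fa fb by auto
        then show ?thesis using ss g by auto
      next
        case False
        have "f a \<in> hadd (f a) (f b)" "f b \<in> hadd (f a) (f b)"
          using mass3[of "f a" "f b"] False fa fb by auto
        then show ?thesis using ss fa fb False by metis
      qed
    next
      case False
      then have "2 \<le> card D" using cD by simp
      then obtain z where z: "z \<in> ssum f D" "z \<in> G" "phi z \<noteq> phi (f a)" using insert.IH fD by blast
      have fR: "f ` insert a D \<subseteq> R" using insert by auto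
      have ss: "ssum f (insert a D) = sp {f a} (ssum f D)" using insert fR by (intro ss_insert) auto
      have sub: "hadd (f a) z \<subseteq> ssum f (insert a D)" unfolding ss setplus_def using z by blast
      have "z \<in> hadd (f a) z" "f a \<in> hadd (f a) z" using mass3[of "f a" z] z fa by auto
      then show ?thesis using sub z fa by (metis subsetD)
    qed
  qed
qed

lemma L3: assumes "finite D" "D \<noteq> {}" "\<forall>i\<in>D. f i \<in> G" shows "\<exists>z\<in>ssum f D. z \<in> G"
proof (cases "card D = 1")
  case True
  then obtain b where D: "D = {b}" by (meson card_1_singletonE)
  then show ?thesis using assms ss_single[of f b] by auto
next
  case False
  then have "2 \<le> card D" using assms by (metis One_nat_def Suc_1 Suc_leI card_gt_0_iff le_antisym not_less_eq_eq)
  then show ?thesis using L2[OF assms(1) _ assms(3)] by blast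
qed

end

definition NN :: "(nat \<Rightarrow> nat set) \<Rightarrow> nat set \<Rightarrow> nat set" where
  "NN su J = (\<Union>j\<in>J. su j)"

lemma NN_un: "NN su (A \<union> B) = NN su A \<union> NN su B" unfolding NN_def by blast
lemma NN_mono: "A \<subseteq> B \<Longrightarrow> NN su A \<subseteq> NN su B" unfolding NN_def by blast
lemma NN_fin: "finite J \<Longrightarrow> (\<forall>j\<in>J. finite (su j)) \<Longrightarrow> finite (NN su J)" unfolding NN_def by blast
lemma NN_insert: "NN su (insert a J) = su a \<union> NN su J" unfolding NN_def by blast

lemma tight_union:
  assumes fin: "finite E" "\<forall>j\<in>E. finite (su j)"
  and hall: "\<forall>J\<subseteq>E. J \<noteq> {} \<longrightarrow> card J + 1 \<le> card (NN su J)"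
  and J1: "J1 \<subseteq> E" "card (NN su J1) \<le> card J1 + 1"
  and J2: "J2 \<subseteq> E" "card (NN su J2) \<le> card J2 + 1"
  and u: "u \<in> NN su J1" "u \<in> NN su J2"
  shows "card (NN su (J1 \<union> J2)) \<le> card (J1 \<union> J2) + 1"
proof -
  have fJ1: "finite J1" using finite_subset[OF J1(1) fin(1)] .
  have fJ2: "finite J2" using finite_subset[OF J2(1) fin(1)] .
  have fN1: "finite (NN su J1)" using NN_fin[OF fJ1] J1 fin by blast
  have fN2: "finite (NN su J2)" using NN_fin[OF fJ2] J2 fin by blast
  have c1: "card (NN su J1 \<union> NN su J2) + card (NN su J1 \<inter> NN su J2) = card (NN su J1) + card (NN su J2)"
    using card_Un_Int[OF fN1 fN2] by linarith
  have c2: "card (J1 \<union> J2) + card (J1 \<inter> J2) = card J1 + card J2"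
    using card_Un_Int[OF fJ1 fJ2] by linarith
  have c3: "card (J1 \<inter> J2) + 1 \<le> card (NN su J1 \<inter> NN su J2)"
  proof (cases "J1 \<inter> J2 = {}")
    case True
    have "NN su J1 \<inter> NN su J2 \<noteq> {}" using u by blast
    then have "1 \<le> card (NN su J1 \<inter> NN su J2)" using fN1 by (simp add: Suc_leI card_gt_0_iff)
    then show ?thesis using True by simp
  next
    case False
    have "J1 \<inter> J2 \<subseteq> E" using J1 by blast
    then have "card (J1 \<inter> J2) + 1 \<le> card (NN su (J1 \<inter> J2))" using hall False by blast
    also have "\<dots> \<le> card (NN su J1 \<inter> NN su J2)"
      using fN1 by (intro card_mono) (auto simp: NN_def)
    finally show ?thesis .
  qed
  have "card (NN su J1 \<union> NN su J2) \<le> card (J1 \<union> J2) + 1"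
    using c1 c2 c3 J1(2) J2(2) by linarith
  then show ?thesis unfolding NN_un .
qed

lemma pair_lemma:
  assumes fin: "finite E" "\<forall>j\<in>E. finite (su j)"
  and hall: "\<forall>J\<subseteq>E. J \<noteq> {} \<longrightarrow> card J + 1 \<le> card (NN su J)"
  and e: "e \<in> E" "2 \<le> card (su e)"
  shows "\<exists>u v. u \<in> su e \<and> v \<in> su e \<and> u \<noteq> v \<and>
     (\<forall>J\<subseteq>E-{e}. J \<noteq> {} \<longrightarrow> u \<in> NN su J \<longrightarrow> v \<in> NN su J \<longrightarrow> card J + 2 \<le> card (NN su J))"
proof (rule ccontr)
  assume neg: "\<not> ?thesis"
  have fe: "finite (su e)" using fin e by blast
  have "su e \<noteq> {}" using e by (intro notI) simp
  then obtain u where u: "u \<in> su e" by blast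
  define V where "V = su e - {u}"
  have fV: "finite V" using fe V_def by simp
  have V0: "V \<noteq> {}"
  proof
    assume "V = {}"
    then have "su e \<subseteq> {u}" using V_def by blast
    then have "card (su e) \<le> card {u}" by (intro card_mono) auto
    then have "card (su e) \<le> 1" by simp
    then show False using e by simp
  qed
  have ex: "\<forall>v\<in>V. \<exists>J. J \<subseteq> E-{e} \<and> J \<noteq> {} \<and> u \<in> NN su J \<and> v \<in> NN su J \<and> card (NN su J) \<le> card J + 1"
  proof
    fix v assume v: "v \<in> V"
    then have "v \<in> su e" "u \<noteq> v" using V_def by auto
    then have "\<exists>J\<subseteq>E-{e}. J \<noteq> {} \<and> u \<in> NN su J \<and> v \<in> NN su J \<and> \<not> card J + 2 \<le> card (NN su J)"
      using neg u by blast
    then obtain J where "J\<subseteq>E-{e}" "J \<noteq> {}" "u \<in> NN su J" "v \<in> NN su J" "\<not> card J + 2 \<le> card (NN su J)"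
      by blast
    moreover then have "card (NN su J) \<le> card J + 1" by linarith
    ultimately show "\<exists>J. J \<subseteq> E-{e} \<and> J \<noteq> {} \<and> u \<in> NN su J \<and> v \<in> NN su J \<and> card (NN su J) \<le> card J + 1"
      by blast
  qed
  then obtain Jf where Jf: "\<forall>v\<in>V. Jf v \<subseteq> E-{e} \<and> Jf v \<noteq> {} \<and> u \<in> NN su (Jf v) \<and> v \<in> NN su (Jf v) \<and> card (NN su (Jf v)) \<le> card (Jf v) + 1"
    using bchoice[OF ex] by blast
  have main: "finite W \<Longrightarrow> W \<noteq> {} \<Longrightarrow> W \<subseteq> V \<Longrightarrow>
     (\<Union>v\<in>W. Jf v) \<subseteq> E-{e} \<and> u \<in> NN su (\<Union>v\<in>W. Jf v) \<and> (\<forall>v\<in>W. v \<in> NN su (\<Union>v\<in>W. Jf v))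
      \<and> card (NN su (\<Union>v\<in>W. Jf v)) \<le> card (\<Union>v\<in>W. Jf v) + 1" for W
  proof (induction W rule: finite_ne_induct)
    case (singleton x)
    then have "x \<in> V" by blast
    then show ?case using Jf by simp
  next
    case (insert x F)
    let ?J = "\<Union>v\<in>F. Jf v"
    have IH: "?J \<subseteq> E-{e}" "u \<in> NN su ?J" "\<forall>v\<in>F. v \<in> NN su ?J" "card (NN su ?J) \<le> card ?J + 1"
      using insert by auto
    have x: "Jf x \<subseteq> E-{e}" "u \<in> NN su (Jf x)" "x \<in> NN su (Jf x)" "card (NN su (Jf x)) \<le> card (Jf x) + 1"
      using Jf insert by auto
    have eq: "(\<Union>v\<in>insert x F. Jf v) = Jf x \<union> ?J" by simp
    have c: "card (NN su (Jf x \<union> ?J)) \<le> card (Jf x \<union> ?J) + 1"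
      using tight_union[OF fin hall, of "Jf x" ?J u] x IH by blast
    have a1: "Jf x \<union> ?J \<subseteq> E-{e}" using IH(1) x(1) by blast
    have a2: "u \<in> NN su (Jf x \<union> ?J)" using IH(2) by (simp add: NN_un)
    have a3: "\<forall>v\<in>insert x F. v \<in> NN su (Jf x \<union> ?J)" using IH(3) x(3) by (simp add: NN_un)
    show ?case unfolding eq using a1 a2 a3 c by blast
  qed
  define J where "J = (\<Union>v\<in>V. Jf v)"
  have J: "J \<subseteq> E-{e}" "u \<in> NN su J" "\<forall>v\<in>V. v \<in> NN su J" "card (NN su J) \<le> card J + 1"
    using main[OF fV V0 subset_refl] J_def by auto
  have se: "su e \<subseteq> NN su J" using J V_def u by blast
  have fJ: "finite J" using finite_subset[OF _ fin(1)] J(1) by blast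
  have "insert e J \<subseteq> E" using J(1) e(1) by blast
  then have "card (insert e J) + 1 \<le> card (NN su (insert e J))" using hall by blast
  also have "NN su (insert e J) = NN su J" using se by (auto simp: NN_insert)
  finally have "card (insert e J) + 1 \<le> card (NN su J)" .
  moreover have "e \<notin> J" using J(1) by blast
  ultimately show False using J(4) fJ by simp
qed

lemma double_count:
  assumes "finite S" "finite E" "\<forall>j\<in>E. su j \<subseteq> S"
  shows "(\<Sum>w\<in>S. card {j\<in>E. w \<in> su j}) = (\<Sum>j\<in>E. card (su j))"
proof -
  have "(\<Sum>w\<in>S. card {j\<in>E. w \<in> su j}) = (\<Sum>w\<in>S. \<Sum>j\<in>E. if w \<in> su j then 1 else 0)"
    using assms by (simp add: sum.inter_filter[symmetric])
  also have "\<dots> = (\<Sum>j\<in>E. \<Sum>w\<in>S. if w \<in> su j then 1 else 0)" by (rule sum.swap)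
  also have "\<dots> = (\<Sum>j\<in>E. card {w\<in>S. w \<in> su j})"
    using assms by (simp add: sum.inter_filter[symmetric])
  also have "\<dots> = (\<Sum>j\<in>E. card (su j))"
  proof (intro sum.cong refl)
    fix j assume "j \<in> E"
    then have "{w\<in>S. w \<in> su j} = su j" using assms by blast
    then show "card {w\<in>S. w \<in> su j} = card (su j)" by simp
  qed
  finally show ?thesis .
qed

context mh begin

definition supp :: "(nat \<Rightarrow> nat \<Rightarrow> 'a) \<Rightarrow> nat set \<Rightarrow> nat \<Rightarrow> nat set" where
  "supp A S j = {i\<in>S. A j i \<noteq> zero}"
definition hallc where "hallc A S E \<longleftrightarrow> (\<forall>J\<subseteq>E. J \<noteq> {} \<longrightarrow> card J + 1 \<le> card (NN (supp A S) J))"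
definition rsum where "rsum A x S j = ssum (\<lambda>i. hmul (A j i) (x i)) S"
definition okc where "okc S E A \<longleftrightarrow> finite S \<and> finite E \<and> (\<forall>j\<in>E. \<forall>i\<in>S. A j i \<in> R) \<and> hallc A S E"
definition goodc where "goodc S E A \<longleftrightarrow> (\<exists>x. (\<forall>i\<in>S. x i \<in> G) \<and> (\<forall>j\<in>E. zero \<in> rsum A x S j))"

lemma supp_fin: "finite S \<Longrightarrow> finite (supp A S j)" unfolding supp_def by simp
lemma supp_sub: "supp A S j \<subseteq> S" unfolding supp_def by blast

lemma rs_insert: assumes "finite S0" "w \<notin> S0" "\<forall>i\<in>insert w S0. A j i \<in> R \<and> x i \<in> R"
  shows "rsum A x (insert w S0) j = sp {hmul (A j w) (x w)} (rsum A x S0 j)"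
  unfolding rsum_def using assms by (intro ss_insert) auto

lemma rs_cong: "finite S \<Longrightarrow> (\<And>i. i \<in> S \<Longrightarrow> hmul (A j i) (x i) = hmul (A' j' i) (x' i)) \<Longrightarrow> rsum A x S j = rsum A' x' S j'"
  unfolding rsum_def by (rule ss_cong)

lemma rs_closed: "finite S \<Longrightarrow> \<forall>i\<in>S. A j i \<in> R \<and> x i \<in> R \<Longrightarrow> rsum A x S j \<subseteq> R"
  unfolding rsum_def by (rule ss_closed) auto

lemma hall_cong: assumes "\<And>j. j \<in> E \<Longrightarrow> supp A' S' j = supp A S j" "hallc A S E"
  shows "hallc A' S' E"
proof -
  have "\<And>J. J \<subseteq> E \<Longrightarrow> NN (supp A' S') J = NN (supp A S) J" unfolding NN_def using assms(1) by blast
  then show ?thesis using assms(2) unfolding hallc_def by simp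
qed

lemma stepA_ok: assumes "okc S E A" "w \<in> S" "\<forall>j\<in>E. A j w = zero"
  shows "okc (S - {w}) E A"
proof -
  have "\<And>j. j \<in> E \<Longrightarrow> supp A (S - {w}) j = supp A S j" unfolding supp_def using assms by auto
  then show ?thesis using assms hall_cong unfolding okc_def by auto
qed

lemma stepA_good: assumes ok: "okc S E A" and w: "w \<in> S" "\<forall>j\<in>E. A j w = zero"
  and g: "goodc (S - {w}) E A"
  shows "goodc S E A"
proof -
  obtain x where x: "\<forall>i\<in>S-{w}. x i \<in> G" "\<forall>j\<in>E. zero \<in> rsum A x (S - {w}) j" using g goodc_def by blast
  define x' where "x' = x(w := unit)"
  have fS: "finite S" using ok okc_def by blast
  have Sw: "S = insert w (S - {w})" using w by blast
  have x'G: "\<forall>i\<in>S. x' i \<in> G" using x x'_def unitG by auto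
  have "zero \<in> rsum A x' S j" if j: "j \<in> E" for j
  proof -
    have AR: "\<forall>i\<in>S. A j i \<in> R" using ok j okc_def by blast
    have "rsum A x' S j = sp {hmul (A j w) (x' w)} (rsum A x' (S - {w}) j)"
      using fS AR x'G w(1) by (subst Sw, intro rs_insert) auto
    also have "rsum A x' (S - {w}) j = rsum A x (S - {w}) j" using fS x'_def by (intro rs_cong) auto
    also have "hmul (A j w) (x' w) = zero" using w j x'_def by simp
    also have "sp {zero} (rsum A x (S - {w}) j) = rsum A x (S - {w}) j"
      using fS AR x by (intro sp_zero rs_closed) auto
    finally show ?thesis using x j by simp
  qed
  then show ?thesis unfolding goodc_def using x'G by blast
qed

lemma stepB_ok: assumes "okc S E A" "w \<in> S" "e \<in> E" "\<forall>j\<in>E. A j w \<noteq> zero \<longrightarrow> j = e"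
  shows "okc (S - {w}) (E - {e}) A"
proof -
  have "\<And>j. j \<in> E - {e} \<Longrightarrow> supp A (S - {w}) j = supp A S j" unfolding supp_def using assms by auto
  moreover have "hallc A S (E - {e})" using assms(1) unfolding okc_def hallc_def by blast
  ultimately have "hallc A (S - {w}) (E - {e})" by (rule hall_cong)
  then show ?thesis using assms unfolding okc_def by auto
qed

lemma card_supp2: assumes "okc S E A" "e \<in> E" shows "2 \<le> card (supp A S e)"
proof -
  have "card {e} + 1 \<le> card (NN (supp A S) {e})" using assms unfolding okc_def hallc_def by blast
  then show ?thesis unfolding NN_def by simp
qed

lemma stepB_good: assumes ok: "okc S E A" and w: "w \<in> S" "e \<in> E" "A e w \<noteq> zero" "\<forall>j\<in>E. A j w \<noteq> zero \<longrightarrow> j = e"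
  and g: "goodc (S - {w}) (E - {e}) A"
  shows "goodc S E A"
proof -
  obtain x where x: "\<forall>i\<in>S-{w}. x i \<in> G" "\<forall>j\<in>E-{e}. zero \<in> rsum A x (S - {w}) j" using g goodc_def by blast
  have fS: "finite S" using ok okc_def by blast
  have AR: "\<forall>j\<in>E. \<forall>i\<in>S. A j i \<in> R" using ok okc_def by blast
  define D where "D = supp A (S - {w}) e"
  have "2 \<le> card (supp A S e)" using card_supp2[OF ok w(2)] .
  moreover have "supp A S e \<subseteq> insert w D" unfolding D_def supp_def by blast
  moreover have fD: "finite D" using fS D_def supp_fin by simp
  ultimately have c2: "2 \<le> card (insert w D)"
    using card_mono[of "insert w D" "supp A S e"] by simp
  have D0: "D \<noteq> {}"
  proof
    assume "D = {}" then show False using c2 by simp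
  qed
  let ?f = "\<lambda>i. hmul (A e i) (x i)"
  have fG: "\<forall>i\<in>D. ?f i \<in> G"
  proof
    fix i assume "i \<in> D"
    then have i: "i \<in> S - {w}" "A e i \<noteq> zero" unfolding D_def supp_def by auto
    then have "A e i \<in> G" "x i \<in> G" using AR x w(2) by auto
    then show "?f i \<in> G" by (rule mulG)
  qed
  have "rsum A x (S - {w}) e = ssum ?f D" unfolding rsum_def D_def supp_def
  proof (rule ss_zero_terms)
    show "finite (S - {w})" using fS by simp
    show "{i \<in> S - {w}. A e i \<noteq> zero} \<subseteq> S - {w}" by blast
    show "?f i = zero" if "i \<in> S - {w} - {i \<in> S - {w}. A e i \<noteq> zero}" for i
    proof -
      have "A e i = zero" "x i \<in> R" using that x by auto
      then show ?thesis by simp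
    qed
    show "?f ` (S - {w}) \<subseteq> R"
    proof
      fix y assume "y \<in> ?f ` (S - {w})"
      then obtain i where i: "i \<in> S - {w}" "y = ?f i" by blast
      then have "A e i \<in> R" "x i \<in> R" using AR x w(2) by auto
      then show "y \<in> R" using i by simp
    qed
  qed
  moreover obtain z where "z \<in> ssum ?f D" "z \<in> G" using L3[OF fD D0 fG] by blast
  ultimately obtain r where r: "r \<in> rsum A x (S - {w}) e" "r \<in> G" by blast
  have aw: "A e w \<in> G" using AR w(1,2,3) by blast
  define xw where "xw = hmul (neg r) (minv (A e w))"
  have xwG: "xw \<in> G" unfolding xw_def using mulG[OF negG[OF r(2)] conjunct1[OF minv[OF aw]]] .
  have axw: "hmul (A e w) xw = neg r"
  proof -
    have R3: "A e w \<in> R" "neg r \<in> R" "minv (A e w) \<in> R" using aw r minv[OF aw] by auto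
    have "hmul (A e w) xw = hmul (hmul (A e w) (neg r)) (minv (A e w))"
      unfolding xw_def using R3 mul_assoc by simp
    also have "\<dots> = hmul (hmul (neg r) (A e w)) (minv (A e w))" using mul_comm[of "A e w" "neg r"] R3 by simp
    also have "\<dots> = hmul (neg r) (hmul (A e w) (minv (A e w)))" using R3 mul_assoc by simp
    finally show ?thesis using minv[OF aw] R3 by simp
  qed
  define x' where "x' = x(w := xw)"
  have x'G: "\<forall>i\<in>S. x' i \<in> G" using x xwG x'_def by auto
  have Sw: "S = insert w (S - {w})" using w by blast
  have "zero \<in> rsum A x' S j" if j: "j \<in> E" for j
  proof -
    have AjR: "\<forall>i\<in>S. A j i \<in> R" using AR j by blast
    have xeq: "rsum A x' (S - {w}) j = rsum A x (S - {w}) j" using fS x'_def by (intro rs_cong) auto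
    have split: "rsum A x' S j = sp {hmul (A j w) (x' w)} (rsum A x (S - {w}) j)"
      using fS AjR x'G xeq w(1) by (subst Sw, subst rs_insert) auto
    have cl: "rsum A x (S - {w}) j \<subseteq> R" using fS AjR x by (intro rs_closed) auto
    show ?thesis
    proof (cases "j = e")
      case True
      have "zero \<in> hadd (neg r) r" using neg_zero_in[of r] add_comm[of r "neg r"] r by auto
      then show ?thesis unfolding split using True axw x'_def r unfolding setplus_def by auto
    next
      case False
      then have "A j w = zero" using w j by blast
      then have "rsum A x' S j = rsum A x (S - {w}) j" unfolding split using cl x'G w by (simp add: sp_zero)
      then show ?thesis using x j False by simp
    qed
  qed
  then show ?thesis unfolding goodc_def using x'G by blast
qed


lemma rs_supp: assumes "finite S" "\<forall>i\<in>S. A j i \<in> R \<and> x i \<in> R"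
  shows "rsum A x S j = ssum (\<lambda>i. hmul (A j i) (x i)) (supp A S j)"
  unfolding rsum_def supp_def
proof (rule ss_zero_terms)
  show "finite S" using assms by simp
  show "{i \<in> S. A j i \<noteq> zero} \<subseteq> S" by blast
  show "hmul (A j i) (x i) = zero" if "i \<in> S - {i \<in> S. A j i \<noteq> zero}" for i
  proof -
    have "A j i = zero" "x i \<in> R" using that assms by auto
    then show ?thesis by simp
  qed
  show "(\<lambda>i. hmul (A j i) (x i)) ` S \<subseteq> R"
  proof
    fix y assume "y \<in> (\<lambda>i. hmul (A j i) (x i)) ` S"
    then obtain i where i: "i \<in> S" "y = hmul (A j i) (x i)" by blast
    then have "A j i \<in> R" "x i \<in> R" using assms by auto
    then show "y \<in> R" using i by simp
  qed
qed

lemma supp_termsG: assumes "\<forall>i\<in>S. A j i \<in> R \<and> x i \<in> G"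
  shows "\<forall>i\<in>supp A S j. hmul (A j i) (x i) \<in> G"
proof
  fix i assume "i \<in> supp A S j"
  then have "A j i \<in> G" "x i \<in> G" using assms unfolding supp_def by auto
  then show "hmul (A j i) (x i) \<in> G" by (rule mulG)
qed

lemma rs_split2: assumes "finite S0" "u \<notin> S0" "v \<notin> S0" "u \<noteq> v"
  "\<forall>i\<in>insert u (insert v S0). A j i \<in> R \<and> x i \<in> R"
  shows "rsum A x (insert u (insert v S0)) j = sp (hadd (hmul (A j u) (x u)) (hmul (A j v) (x v))) (rsum A x S0 j)"
proof -
  have c: "rsum A x S0 j \<subseteq> R" using assms by (intro rs_closed) auto
  have "rsum A x (insert u (insert v S0)) j = sp {hmul (A j u) (x u)} (rsum A x (insert v S0) j)"
    using assms by (intro rs_insert) auto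
  also have "rsum A x (insert v S0) j = sp {hmul (A j v) (x v)} (rsum A x S0 j)"
    using assms by (intro rs_insert) auto
  also have "sp {hmul (A j u) (x u)} (sp {hmul (A j v) (x v)} (rsum A x S0 j))
      = sp (sp {hmul (A j u) (x u)} {hmul (A j v) (x v)}) (rsum A x S0 j)"
    using assms c by (intro sp_assoc[symmetric]) auto
  finally show ?thesis by simp
qed

lemma hallC:
  assumes hall: "\<forall>J\<subseteq>E. J \<noteq> {} \<longrightarrow> card J + 1 \<le> card (NN su J)"
  and fin: "finite E" "\<forall>j\<in>E. finite (su j)"
  and P: "\<forall>J\<subseteq>E-{e}. J \<noteq> {} \<longrightarrow> u \<in> NN su J \<longrightarrow> v \<in> NN su J \<longrightarrow> card J + 2 \<le> card (NN su J)"
  and su': "\<And>j. j \<in> E - {e} \<Longrightarrow> su' j = (su j - {v}) \<union> (if v \<in> su j then {u} else {})"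
  and uv: "u \<noteq> v"
  shows "\<forall>J\<subseteq>E-{e}. J \<noteq> {} \<longrightarrow> card J + 1 \<le> card (NN su' J)"
proof (intro allI impI)
  fix J assume J: "J \<subseteq> E - {e}" "J \<noteq> {}"
  have fJ: "finite J" using J fin finite_subset[of J E] by blast
  have fN: "finite (NN su J)" using NN_fin[OF fJ] J fin by blast
  have h: "card J + 1 \<le> card (NN su J)" using hall J by blast
  have "NN su' J = (\<Union>j\<in>J. (su j - {v}) \<union> (if v \<in> su j then {u} else {}))"
    unfolding NN_def
  proof (rule SUP_cong[OF refl])
    fix j assume "j \<in> J"
    then have "j \<in> E - {e}" using J by blast
    then show "su' j = (su j - {v}) \<union> (if v \<in> su j then {u} else {})" by (rule su')
  qed
  also have "\<dots> = (NN su J - {v}) \<union> (if v \<in> NN su J then {u} else {})"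
    unfolding NN_def using uv by (auto split: if_splits)
  finally have eq: "NN su' J = (NN su J - {v}) \<union> (if v \<in> NN su J then {u} else {})" .
  show "card J + 1 \<le> card (NN su' J)"
  proof (cases "v \<in> NN su J")
    case False
    then have "NN su' J = NN su J" using eq by simp
    then show ?thesis using h by simp
  next
    case vin: True
    show ?thesis
    proof (cases "u \<in> NN su J")
      case True
      then have "NN su' J = NN su J - {v}" using eq vin uv by auto
      moreover have "card J + 2 \<le> card (NN su J)" using P J True vin by blast
      ultimately show ?thesis using fN vin by simp
    next
      case False
      have "NN su' J = insert u (NN su J - {v})" using eq vin by simp
      moreover have "card (insert u (NN su J - {v})) = card (NN su J)"
        using False fN vin uv card_Suc_Diff1[OF fN vin] by (simp add: card_insert_if)
      ultimately show ?thesis using h by simp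
    qed
  qed
qed


lemma stepC:
  assumes ok: "okc S E A" and e: "e \<in> E" "card (supp A S e) \<noteq> 3"
  and IH: "\<And>S' E' A'. card S' < card S \<Longrightarrow> okc S' E' A' \<Longrightarrow> goodc S' E' A'"
  shows "goodc S E A"
proof -
  have fS: "finite S" and fE: "finite E" and AR: "\<forall>j\<in>E. \<forall>i\<in>S. A j i \<in> R" and hall: "hallc A S E"
    using ok unfolding okc_def by auto
  have hallN: "\<forall>J\<subseteq>E. J \<noteq> {} \<longrightarrow> card J + 1 \<le> card (NN (supp A S) J)" using hall hallc_def by blast
  have finsup: "\<forall>j\<in>E. finite (supp A S j)" using fS supp_fin by blast
  obtain u v where uv: "u \<in> supp A S e" "v \<in> supp A S e" "u \<noteq> v"
    and P: "\<forall>J\<subseteq>E-{e}. J \<noteq> {} \<longrightarrow> u \<in> NN (supp A S) J \<longrightarrow> v \<in> NN (supp A S) J \<longrightarrow> card J + 2 \<le> card (NN (supp A S) J)"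
    using pair_lemma[OF fE finsup hallN e(1) card_supp2[OF ok e(1)]] by blast
  have uS: "u \<in> S" and vS: "v \<in> S" using uv supp_sub by blast+
  have au: "A e u \<in> G" and av: "A e v \<in> G" using uv AR e(1) unfolding supp_def by auto
  define lam where "lam = hmul (neg (A e u)) (minv (A e v))"
  have lamG: "lam \<in> G" unfolding lam_def using mulG[OF negG[OF au] conjunct1[OF minv[OF av]]] .
  have lamR: "lam \<in> R" using lamG by blast
  define A' where "A' = (\<lambda>j i. if i = u then pick (A j u) (hmul (A j v) lam) else A j i)"
  define S' where "S' = S - {v}"
  define E' where "E' = E - {e}"
  have uS': "u \<in> S'" using uS uv S'_def by blast
  have A'R: "\<forall>j\<in>E'. \<forall>i\<in>S'. A' j i \<in> R"
  proof (intro ballI)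
    fix j i assume j: "j \<in> E'" and i: "i \<in> S'"
    have "A j u \<in> R" "A j v \<in> R" "A j i \<in> R" using AR j i uS vS E'_def S'_def by auto
    then show "A' j i \<in> R" unfolding A'_def using pickR lamR by auto
  qed
  have supp': "supp A' S' j = (supp A S j - {v}) \<union> (if v \<in> supp A S j then {u} else {})" if j: "j \<in> E'" for j
  proof -
    have R2: "A j u \<in> R" "A j v \<in> R" using AR j uS vS E'_def by auto
    have "A' j u \<noteq> zero \<longleftrightarrow> A j u \<noteq> zero \<or> A j v \<noteq> zero"
    proof -
      have "A' j u = pick (A j u) (hmul (A j v) lam)" unfolding A'_def by simp
      moreover have "hmul (A j v) lam = zero \<longleftrightarrow> A j v = zero" using mul_nz[of "A j v" lam] R2 lamG by auto
      ultimately show ?thesis using pick(2)[of "A j u" "hmul (A j v) lam"] R2 lamR by auto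
    qed
    then show ?thesis unfolding supp_def S'_def A'_def using uS vS uv(3) by (auto split: if_splits)
  qed
  have hall': "hallc A' S' E'"
  proof -
    have "\<forall>J\<subseteq>E-{e}. J \<noteq> {} \<longrightarrow> card J + 1 \<le> card (NN (supp A' S') J)"
      by (rule hallC[OF hallN fE finsup P _ uv(3)]) (use supp' E'_def in blast)
    then show ?thesis unfolding hallc_def E'_def .
  qed
  have ok': "okc S' E' A'" unfolding okc_def using fS fE A'R hall' S'_def E'_def by auto
  have "card S' < card S" unfolding S'_def using card_Diff1_less[OF fS vS] .
  then obtain x where x: "\<forall>i\<in>S'. x i \<in> G" "\<forall>j\<in>E'. zero \<in> rsum A' x S' j"
    using IH ok' goodc_def by blast
  have xu: "x u \<in> G" using x uS' by blast
  define x' where "x' = x(v := hmul lam (x u))"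
  have x'G: "\<forall>i\<in>S. x' i \<in> G" using x x'_def S'_def mulG[OF lamG xu] by auto
  define S0 where "S0 = S - {u, v}"
  have fS0: "finite S0" using fS S0_def by simp
  have S_eq: "S = insert u (insert v S0)" using uS vS S0_def by blast
  have S'_eq: "S' = insert u S0" using uS vS uv(3) S0_def S'_def by blast
  have u0: "u \<notin> S0" "v \<notin> S0" using S0_def by auto
  have x'u: "x' u = x u" and x'v: "x' v = hmul lam (x u)" using x'_def uv(3) by auto
  have split: "rsum A x' S j = sp (hadd (hmul (A j u) (x u)) (hmul (A j v) (hmul lam (x u)))) (rsum A x S0 j)"
    if j: "j \<in> E" for j
  proof -
    have "rsum A x' S j = sp (hadd (hmul (A j u) (x' u)) (hmul (A j v) (x' v))) (rsum A x' S0 j)"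
      unfolding S_eq using fS0 u0 uv(3) AR j x'G S_eq by (intro rs_split2) auto
    moreover have "rsum A x' S0 j = rsum A x S0 j" using fS0 u0 x'_def by (intro rs_cong) auto
    ultimately show ?thesis using x'u x'v by simp
  qed
  have cl0: "rsum A x S0 j \<subseteq> R" if "j \<in> E" for j
    using fS0 AR that x S0_def S'_def by (intro rs_closed) auto
  have "zero \<in> rsum A x' S j" if j: "j \<in> E" for j
  proof (cases "j = e")
    case False
    then have jE': "j \<in> E'" using j E'_def by blast
    have R2: "A j u \<in> R" "A j v \<in> R" using AR j uS vS by auto
    let ?p = "A j u" and ?q = "hmul (A j v) lam"
    have pk: "pick ?p ?q \<in> hadd ?p ?q" using pick(1) R2 lamR by simp
    have "hmul (x u) (pick ?p ?q) \<in> hmul (x u) ` hadd ?p ?q" using pk by blast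
    also have "\<dots> = hadd (hmul (x u) ?p) (hmul (x u) ?q)" using distrib R2 lamR xu by simp
    finally have mem: "hmul (x u) (pick ?p ?q) \<in> hadd (hmul (x u) ?p) (hmul (x u) ?q)" .
    have xuR: "x u \<in> R" using xu by blast
    have pkR: "pick ?p ?q \<in> R" using pickR R2 lamR by simp
    have e1: "hmul (x u) (pick ?p ?q) = hmul (A' j u) (x u)" unfolding A'_def using mul_comm[OF xuR pkR] by simp
    have e2: "hmul (x u) ?p = hmul (A j u) (x u)" using mul_comm[OF xuR R2(1)] .
    have e3: "hmul (x u) ?q = hmul (A j v) (hmul lam (x u))"
    proof -
      have "hmul (x u) ?q = hmul ?q (x u)" using mul_comm xuR R2 lamR by simp
      also have "\<dots> = hmul (A j v) (hmul lam (x u))" using mul_assoc R2 lamR xuR by simp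
      finally show ?thesis .
    qed
    have mem2: "hmul (A' j u) (x u) \<in> hadd (hmul (A j u) (x u)) (hmul (A j v) (hmul lam (x u)))"
      using mem e1 e2 e3 by simp
    have red: "rsum A' x S' j = sp {hmul (A' j u) (x u)} (rsum A' x S0 j)"
      unfolding S'_eq using fS0 u0 A'R jE' x S'_eq by (intro rs_insert) auto
    have "rsum A' x S0 j = rsum A x S0 j" using fS0 u0 A'_def by (intro rs_cong) auto
    then have "rsum A' x S' j \<subseteq> rsum A x' S j"
      unfolding red split[OF j] using mem2 by (intro sp_mono) auto
    then show ?thesis using x(2) jE' by blast
  next
    case True
    define t where "t = hmul (A e u) (x u)"
    have tG: "t \<in> G" unfolding t_def using mulG[OF au xu] .
    have tR: "t \<in> R" using tG by blast
    have av_lam: "hmul (A e v) lam = neg (A e u)"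
    proof -
      have R3: "A e v \<in> R" "neg (A e u) \<in> R" "minv (A e v) \<in> R" using av au minv[OF av] by auto
      have "hmul (A e v) lam = hmul (hmul (A e v) (neg (A e u))) (minv (A e v))"
        unfolding lam_def using R3 mul_assoc by simp
      also have "\<dots> = hmul (hmul (neg (A e u)) (A e v)) (minv (A e v))" using mul_comm[of "A e v" "neg (A e u)"] R3 by simp
      also have "\<dots> = hmul (neg (A e u)) (hmul (A e v) (minv (A e v)))" using R3 mul_assoc by simp
      finally show ?thesis using minv[OF av] R3 by simp
    qed
    have tv: "hmul (A e v) (hmul lam (x u)) = neg t"
    proof -
      have "hmul (A e v) (hmul lam (x u)) = hmul (hmul (A e v) lam) (x u)"
        using mul_assoc av lamR xu by simp
      also have "\<dots> = hmul (neg (A e u)) (x u)" using av_lam by simp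
      also have "\<dots> = neg t" unfolding t_def using neg_mul au xu by simp
      finally show ?thesis .
    qed
    have sp_e: "rsum A x' S e = sp (hadd t (neg t)) (rsum A x S0 e)"
      using split[OF e(1)] tv t_def by simp
    have zt: "zero \<in> hadd t (neg t)" using neg_zero_in tR by blast
    define D where "D = supp A S0 e"
    have fD: "finite D" using fS0 D_def supp_fin by simp
    have rest: "rsum A x S0 e = ssum (\<lambda>i. hmul (A e i) (x i)) D"
      unfolding D_def using fS0 AR e(1) x S0_def S'_def by (intro rs_supp) auto
    have DG: "\<forall>i\<in>D. hmul (A e i) (x i) \<in> G"
      unfolding D_def using AR e(1) x S0_def S'_def by (intro supp_termsG) auto
    have Deq: "supp A S e = insert u (insert v D)" unfolding D_def supp_def S0_def using uv unfolding supp_def by auto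
    have cD: "card (supp A S e) = card D + 2" using Deq fD u0 uv(3) D_def supp_sub
      by (metis (no_types, lifting) add_2_eq_Suc' card_insert_disjoint finite_insert insert_iff subsetD)
    show ?thesis
    proof (cases "D = {}")
      case True
      then have "rsum A x S0 e = {zero}" using rest by simp
      then show ?thesis using True sp_e zt \<open>j = e\<close> add_closed[OF tR neg_in[OF tR]] by (simp add: sp_zero2)
    next
      case False
      then have "card D \<noteq> 0" using fD by simp
      then have "2 \<le> card D" using cD e(2) by linarith
      then obtain z where z: "z \<in> ssum (\<lambda>i. hmul (A e i) (x i)) D" "z \<in> G" "phi z \<noteq> phi t"
        using L2[OF fD _ DG] by blast
      have "neg z \<in> hadd t (neg t)" using exact_pair[OF tG negG[OF z(2)]] phi_neg[OF z(2)] z(3) by simp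
      moreover have "zero \<in> hadd (neg z) z" using neg_zero_in[of z] add_comm[of z "neg z"] z(2) by auto
      ultimately have "zero \<in> sp (hadd t (neg t)) (rsum A x S0 e)" using z(1) rest unfolding setplus_def by blast
      then show ?thesis using sp_e \<open>j = e\<close> by simp
    qed
  qed
  then show ?thesis unfolding goodc_def using x'G by blast
qed

end

context mh begin

lemma sp_swap4: assumes "X \<subseteq> R" "Y \<subseteq> R" "Z \<subseteq> R" "W \<subseteq> R"
  shows "sp (sp X Y) (sp Z W) = sp (sp X Z) (sp Y W)"
proof -
  have c: "sp Z W \<subseteq> R" "sp Y W \<subseteq> R" using assms sp_closed by auto
  have "sp (sp X Y) (sp Z W) = sp X (sp Y (sp Z W))" using assms c by (intro sp_assoc)
  also have "sp Y (sp Z W) = sp Z (sp Y W)" using assms by (intro sp_lcomm)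
  also have "sp X (sp Z (sp Y W)) = sp (sp X Z) (sp Y W)" using assms c by (intro sp_assoc[symmetric])
  finally show ?thesis .
qed

lemma ss_sub_sp: "finite C \<Longrightarrow> \<forall>i\<in>C. p i \<in> R \<and> q i \<in> R \<and> f i \<in> hadd (p i) (q i) \<Longrightarrow>
   ssum f C \<subseteq> sp (ssum p C) (ssum q C)"
proof (induction C rule: finite_induct)
  case empty then show ?case using zero_add[of zero] by simp
next
  case (insert a C)
  have fR: "\<forall>i\<in>insert a C. f i \<in> R" using insert.prems add_closed by blast
  have cl: "ssum p C \<subseteq> R" "ssum q C \<subseteq> R" using insert.hyps(1) insert.prems by (intro ss_closed; auto)+
  have "ssum f (insert a C) = sp {f a} (ssum f C)" using insert fR by (intro ss_insert) auto
  also have "\<dots> \<subseteq> sp (hadd (p a) (q a)) (sp (ssum p C) (ssum q C))"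
    using insert by (intro sp_mono) auto
  also have "\<dots> = sp (sp {p a} {q a}) (sp (ssum p C) (ssum q C))" by simp
  also have "\<dots> = sp (sp {p a} (ssum p C)) (sp {q a} (ssum q C))"
    using insert cl by (intro sp_swap4) auto
  also have "sp {p a} (ssum p C) = ssum p (insert a C)" using insert by (intro ss_insert[symmetric]) auto
  also have "sp {q a} (ssum q C) = ssum q (insert a C)" using insert by (intro ss_insert[symmetric]) auto
  finally show ?case .
qed

lemma neg_unit_mul: "y \<in> R \<Longrightarrow> hmul (neg unit) y = neg y"
  using neg_mul[of unit y] by simp

lemma avoid_twist: assumes "rho \<in> G" shows "\<exists>g\<in>G. phi g \<noteq> c \<and> phi (hmul rho g) \<noteq> d"
proof -
  obtain a b e where abe: "a \<in> phi ` G" "b \<in> phi ` G" "e \<in> phi ` G" "a \<noteq> b" "a \<noteq> e" "b \<noteq> e"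
    using three by blast
  from abe(1) obtain g1 where g1: "g1 \<in> G" "a = phi g1" by blast
  from abe(2) obtain g2 where g2: "g2 \<in> G" "b = phi g2" by blast
  from abe(3) obtain g3 where g3: "g3 \<in> G" "e = phi g3" by blast
  have g: "g1 \<in> G" "g2 \<in> G" "g3 \<in> G" "phi g1 \<noteq> phi g2" "phi g1 \<noteq> phi g3" "phi g2 \<noteq> phi g3"
    using g1 g2 g3 abe by auto
  have inj: "phi (hmul rho a) \<noteq> phi (hmul rho b)" if "a \<in> G" "b \<in> G" "phi a \<noteq> phi b" for a b
  proof
    assume "phi (hmul rho a) = phi (hmul rho b)"
    then have "phi rho \<otimes>\<^bsub>H\<^esub> phi a = phi rho \<otimes>\<^bsub>H\<^esub> phi b" using phi_mul assms that by simp
    moreover have "phi rho \<in> Units H" using group.Units_eq[OF grpH] phi_car assms by simp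
    ultimately show False
      using monoid.Units_l_cancel[OF group.is_monoid[OF grpH], of "phi rho" "phi a" "phi b"] phi_car that by simp
  qed
  have q: "phi (hmul rho g1) \<noteq> phi (hmul rho g2)" "phi (hmul rho g1) \<noteq> phi (hmul rho g3)" "phi (hmul rho g2) \<noteq> phi (hmul rho g3)"
    using inj g by auto
  show ?thesis
  proof (rule ccontr)
    assume "\<not> ?thesis"
    then have b: "phi g1 = c \<or> phi (hmul rho g1) = d" "phi g2 = c \<or> phi (hmul rho g2) = d"
      "phi g3 = c \<or> phi (hmul rho g3) = d" using g by blast+
    show False using b g(4-6) q by (elim disjE) simp_all
  qed
qed


lemma rs_two_supp: assumes "finite S0" "\<forall>i\<in>S0. A j i \<in> R \<and> x i \<in> G" "supp A S0 j = {a, b}" "a \<noteq> b"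
  shows "rsum A x S0 j = hadd (hmul (A j a) (x a)) (hmul (A j b) (x b))"
    "hmul (A j a) (x a) \<in> G" "hmul (A j b) (x b) \<in> G"
proof -
  have G2: "\<forall>i\<in>supp A S0 j. hmul (A j i) (x i) \<in> G" using assms by (intro supp_termsG) auto
  then show "hmul (A j a) (x a) \<in> G" "hmul (A j b) (x b) \<in> G" using assms by auto
  have "rsum A x S0 j = ssum (\<lambda>i. hmul (A j i) (x i)) (supp A S0 j)" using assms by (intro rs_supp) auto
  also have "\<dots> = hadd (hmul (A j a) (x a)) (hmul (A j b) (x b))"
    unfolding assms(3) using G2 assms by (intro ss_two) auto
  finally show "rsum A x S0 j = hadd (hmul (A j a) (x a)) (hmul (A j b) (x b))" .
qed

lemma zero_pair: assumes "ta \<in> G" "tb \<in> R" "zero \<in> hadd ta tb"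
  shows "hadd ta tb = hadd ta (neg ta)"
  using neg_unique[of ta tb] assms by auto

lemma stepD:
  assumes ok: "okc S E A" and all3: "\<forall>j\<in>E. card (supp A S j) = 3"
  and w: "w \<in> S" "e \<in> E" "f \<in> E" "e \<noteq> f" "\<forall>j\<in>E. A j w \<noteq> zero \<longleftrightarrow> (j = e \<or> j = f)"
  and IH: "\<And>S' E' A'. card S' < card S \<Longrightarrow> okc S' E' A' \<Longrightarrow> goodc S' E' A'"
  shows "goodc S E A"
proof -
  have fS: "finite S" and fE: "finite E" and AR: "\<forall>j\<in>E. \<forall>i\<in>S. A j i \<in> R" and hall: "hallc A S E"
    using ok unfolding okc_def by auto
  have hallN: "\<forall>J\<subseteq>E. J \<noteq> {} \<longrightarrow> card J + 1 \<le> card (NN (supp A S) J)" using hall hallc_def by blast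
  obtain g :: nat where gE: "g \<notin> E" using ex_new_if_finite[OF infinite_UNIV_nat fE] by blast
  have aew: "A e w \<in> G" and afw: "A f w \<in> G" using AR w by auto
  define A' where "A' = A(g := (\<lambda>i. pick (hmul (A f w) (A e i)) (neg (hmul (A e w) (A f i)))))"
  define S' where "S' = S - {w}"
  define E' where "E' = insert g (E - {e, f})"
  have fS': "finite S'" using fS S'_def by simp
  have A'g: "A' g i = pick (hmul (A f w) (A e i)) (neg (hmul (A e w) (A f i)))" for i unfolding A'_def by simp
  have A'j: "A' j = A j" if "j \<in> E" for j using that gE A'_def by auto
  have A'R: "\<forall>j\<in>E'. \<forall>i\<in>S'. A' j i \<in> R"
  proof (intro ballI)
    fix j i assume j: "j \<in> E'" and i: "i \<in> S'"
    show "A' j i \<in> R"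
    proof (cases "j = g")
      case True
      have "A e i \<in> R" "A f i \<in> R" using AR w i S'_def by auto
      then show ?thesis unfolding True A'g using aew afw by (intro pickR) auto
    next
      case False
      then have "j \<in> E" using j E'_def by blast
      then show ?thesis using A'j AR i S'_def by auto
    qed
  qed
  have supp_g: "supp A' S' g = (supp A S e \<union> supp A S f) - {w}"
  proof -
    have "A' g i \<noteq> zero \<longleftrightarrow> A e i \<noteq> zero \<or> A f i \<noteq> zero" if i: "i \<in> S'" for i
    proof -
      have R2: "A e i \<in> R" "A f i \<in> R" using AR w i S'_def by auto
      have "hmul (A f w) (A e i) = zero \<longleftrightarrow> A e i = zero" using mul_nz[of "A f w" "A e i"] afw R2 by auto
      moreover have "neg (hmul (A e w) (A f i)) = zero \<longleftrightarrow> A f i = zero"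
        using mul_nz[of "A e w" "A f i"] aew R2 neg_eq_zero_iff[of "hmul (A e w) (A f i)"] by auto
      ultimately show ?thesis unfolding A'g using pick(2)[of "hmul (A f w) (A e i)" "neg (hmul (A e w) (A f i))"] R2 aew afw by auto
    qed
    then show ?thesis unfolding supp_def S'_def by auto
  qed
  have supp_j: "supp A' S' j = supp A S j" if j: "j \<in> E - {e, f}" for j
  proof -
    have "A j w = zero" using w j by blast
    then show ?thesis unfolding supp_def S'_def using A'j j by auto
  qed
  have wnot: "w \<notin> NN (supp A S) J" if "J \<subseteq> E - {e, f}" for J
    using that w(5) unfolding NN_def supp_def by blast
  have hall': "hallc A' S' E'"
    unfolding hallc_def
  proof (intro allI impI)
    fix J assume J: "J \<subseteq> E'" "J \<noteq> {}"
    show "card J + 1 \<le> card (NN (supp A' S') J)"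
    proof (cases "g \<in> J")
      case False
      then have JE: "J \<subseteq> E - {e, f}" using J E'_def by blast
      have "NN (supp A' S') J = NN (supp A S) J" unfolding NN_def using supp_j JE by (intro SUP_cong refl) auto
      then show ?thesis using hallN JE J(2) by auto
    next
      case True
      define J1 where "J1 = J - {g}"
      have J1E: "J1 \<subseteq> E - {e, f}" using J J1_def E'_def by blast
      define J0 where "J0 = insert e (insert f J1)"
      have J0E: "J0 \<subseteq> E" using J1E w J0_def by blast
      have "J1 \<subseteq> E" using J1E by blast
      then have fJ1: "finite J1" using finite_subset fE by blast
      have cJ0: "card J0 = card J + 1"
      proof -
        have "e \<notin> J1" "f \<notin> J1" using J1E by auto
        then have "card J0 = card J1 + 2" using fJ1 w(4) J0_def by simp
        moreover have "J = insert g J1" using True J1_def by blast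
        moreover have "g \<notin> J1" using J1_def by blast
        ultimately show ?thesis using fJ1 by simp
      qed
      have h0: "card J0 + 1 \<le> card (NN (supp A S) J0)" using hallN J0E J0_def by blast
      have N1: "NN (supp A' S') J1 = NN (supp A S) J1" unfolding NN_def using supp_j J1E by (intro SUP_cong refl) auto
      have "J = insert g J1" using True J1_def by blast
      then have "NN (supp A' S') J = supp A' S' g \<union> NN (supp A' S') J1" using NN_insert by simp
      also have "\<dots> = NN (supp A S) J0 - {w}" unfolding supp_g N1 J0_def NN_insert using wnot[OF J1E] by auto
      finally have eqN: "NN (supp A' S') J = NN (supp A S) J0 - {w}" .
      have fJ0: "finite J0" using finite_subset[OF J0E fE] .
      have fN0: "finite (NN (supp A S) J0)" using NN_fin[OF fJ0] fS supp_fin by blast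
      have "card (NN (supp A S) J0) \<le> card (NN (supp A S) J0 - {w}) + 1"
        using card_Diff_singleton_if[of "NN (supp A S) J0" w] by (cases "w \<in> NN (supp A S) J0") auto
      then show ?thesis using eqN h0 cJ0 by simp
    qed
  qed
  have ok': "okc S' E' A'" unfolding okc_def using fS' fE A'R hall' E'_def by auto
  have "card S' < card S" unfolding S'_def using card_Diff1_less[OF fS w(1)] .
  then obtain x where x: "\<forall>i\<in>S'. x i \<in> G" "\<forall>j\<in>E'. zero \<in> rsum A' x S' j"
    using IH ok' goodc_def by blast
  have xR: "\<forall>i\<in>S'. x i \<in> R" using x by blast
  define re where "re = rsum A x S' e"
  define rf where "rf = rsum A x S' f"
  have ARe: "\<forall>i\<in>S'. A e i \<in> R" and ARf: "\<forall>i\<in>S'. A f i \<in> R" using AR w S'_def by auto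
  have re_cl: "re \<subseteq> R" unfolding re_def using fS' ARe xR by (intro rs_closed) auto
  have rf_cl: "rf \<subseteq> R" unfolding rf_def using fS' ARf xR by (intro rs_closed) auto
  have z0: "zero \<in> rsum A' x S' g" using x(2) E'_def by blast
  have sub: "rsum A' x S' g \<subseteq> sp (hmul (A f w) ` re) (hmul (neg unit) ` hmul (A e w) ` rf)"
  proof -
    let ?p = "\<lambda>i. hmul (A f w) (hmul (A e i) (x i))"
    let ?q = "\<lambda>i. hmul (neg unit) (hmul (A e w) (hmul (A f i) (x i)))"
    have terms: "\<forall>i\<in>S'. ?p i \<in> R \<and> ?q i \<in> R \<and> hmul (A' g i) (x i) \<in> hadd (?p i) (?q i)"
    proof
      fix i assume i: "i \<in> S'"
      have R: "A e i \<in> R" "A f i \<in> R" "x i \<in> R" "A e w \<in> R" "A f w \<in> R" using ARe ARf xR i aew afw by auto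
      let ?P = "hmul (A f w) (A e i)" and ?Q = "neg (hmul (A e w) (A f i))"
      have PQ: "?P \<in> R" "?Q \<in> R" using R by auto
      have "hmul (x i) (pick ?P ?Q) \<in> hmul (x i) ` hadd ?P ?Q" using pick(1)[OF PQ] by blast
      also have "\<dots> = hadd (hmul (x i) ?P) (hmul (x i) ?Q)" using distrib R PQ by simp
      finally have m: "hmul (x i) (pick ?P ?Q) \<in> hadd (hmul (x i) ?P) (hmul (x i) ?Q)" .
      have e1: "hmul (x i) (pick ?P ?Q) = hmul (A' g i) (x i)" unfolding A'g using mul_comm[OF R(3) pickR[OF PQ]] by simp
      have e2: "hmul (x i) ?P = ?p i"
      proof -
        have "hmul (x i) ?P = hmul ?P (x i)" using mul_comm[OF R(3) PQ(1)] .
        also have "\<dots> = ?p i" using mul_assoc R by simp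
        finally show ?thesis .
      qed
      have e3: "hmul (x i) ?Q = ?q i"
      proof -
        have "hmul (x i) ?Q = hmul ?Q (x i)" using mul_comm[OF R(3) PQ(2)] .
        also have "\<dots> = neg (hmul (hmul (A e w) (A f i)) (x i))" using neg_mul R by simp
        also have "\<dots> = neg (hmul (A e w) (hmul (A f i) (x i)))" using mul_assoc R by simp
        also have "\<dots> = ?q i" using neg_unit_mul R by simp
        finally show ?thesis .
      qed
      show "?p i \<in> R \<and> ?q i \<in> R \<and> hmul (A' g i) (x i) \<in> hadd (?p i) (?q i)"
        using m e1 e2 e3 R by simp
    qed
    have "rsum A' x S' g \<subseteq> sp (ssum ?p S') (ssum ?q S')"
      unfolding rsum_def using terms fS' by (intro ss_sub_sp) auto
    also have "ssum ?p S' = hmul (A f w) ` re" unfolding re_def rsum_def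
      using fS' afw ARe xR by (intro ss_scale[symmetric]) auto
    also have "ssum ?q S' = hmul (neg unit) ` ssum (\<lambda>i. hmul (A e w) (hmul (A f i) (x i))) S'"
      using fS' aew ARf xR by (intro ss_scale[symmetric]) auto
    also have "ssum (\<lambda>i. hmul (A e w) (hmul (A f i) (x i))) S' = hmul (A e w) ` rf" unfolding rf_def rsum_def
      using fS' aew ARf xR by (intro ss_scale[symmetric]) auto
    finally show ?thesis .
  qed
  have "zero \<in> sp (hmul (A f w) ` re) (hmul (neg unit) ` hmul (A e w) ` rf)" using z0 sub by (rule subsetD[rotated])
  then obtain p q where pq: "p \<in> hmul (A f w) ` re" "q \<in> hmul (neg unit) ` hmul (A e w) ` rf" "zero \<in> hadd p q"
    unfolding setplus_def by blast
  from pq(1) obtain r1 where r1: "r1 \<in> re" "p = hmul (A f w) r1" by blast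
  from pq(2) obtain r2 where r2: "r2 \<in> rf" "q = hmul (neg unit) (hmul (A e w) r2)" by blast
  have r1R: "r1 \<in> R" and r2R: "r2 \<in> R" using r1 r2 re_cl rf_cl by auto
  have pR: "p \<in> R" using r1 r1R afw by auto
  have qR: "q \<in> R" using r2 r2R aew by auto
  have q1: "q = neg (hmul (A e w) r2)" using r2 neg_unit_mul[of "hmul (A e w) r2"] r2R aew by simp
  have q2: "q = neg p" using neg_unique[OF pR qR pq(3)] .
  have "hmul (A e w) r2 = p" using neg_inj[of "hmul (A e w) r2" p] q1 q2 pR r2R aew by simp
  then have eqr: "hmul (A f w) r1 = hmul (A e w) r2" using r1 by simp
  note r12 = r1(1) r2(1)
  have "\<exists>s1 s2. s1 \<in> re \<and> s2 \<in> rf \<and> s1 \<in> R \<and> s2 \<in> G \<and> hmul (A f w) s1 = hmul (A e w) s2"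
  proof (cases "r2 = zero")
    case False then show ?thesis using r12 r1R r2R eqr by blast
  next
    case True
    then have "hmul (A f w) r1 = zero" using eqr aew by simp
    then have r10: "r1 = zero" using mul_nz afw r1R by auto
    have two: "\<exists>a b. supp A S' j = {a, b} \<and> a \<noteq> b" if j: "j \<in> {e, f}" for j
    proof -
      have jE: "j \<in> E" using j w by auto
      have "w \<in> supp A S j" using w j unfolding supp_def by auto
      moreover have "supp A S' j = supp A S j - {w}" unfolding supp_def S'_def by auto
      ultimately have "card (supp A S' j) = 2" using all3 jE fS supp_fin by simp
      then show ?thesis by (meson card_2_iff)
    qed
    obtain a b where ab: "supp A S' e = {a, b}" "a \<noteq> b" using two by blast
    obtain c d where cd: "supp A S' f = {c, d}" "c \<noteq> d" using two by blast
    have xG: "\<forall>i\<in>S'. A e i \<in> R \<and> x i \<in> G" "\<forall>i\<in>S'. A f i \<in> R \<and> x i \<in> G" using ARe ARf x by auto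
    note E2 = rs_two_supp[OF fS' xG(1) ab] and F2 = rs_two_supp[OF fS' xG(2) cd]
    let ?ta = "hmul (A e a) (x a)" and ?tb = "hmul (A e b) (x b)"
    let ?sc = "hmul (A f c) (x c)" and ?sd = "hmul (A f d) (x d)"
    have "zero \<in> re" using r12 r10 by simp
    then have reeq: "re = hadd ?ta (neg ?ta)" unfolding re_def using E2 zero_pair by auto
    have "zero \<in> rf" using r12 True by simp
    then have rfeq: "rf = hadd ?sc (neg ?sc)" unfolding rf_def using F2 zero_pair by auto
    define rho where "rho = hmul (A e w) (minv (A f w))"
    have rhoG: "rho \<in> G" unfolding rho_def using mulG[OF aew conjunct1[OF minv[OF afw]]] .
    obtain g0 where g0: "g0 \<in> G" "phi g0 \<noteq> phi ?sc" "phi (hmul rho g0) \<noteq> phi ?ta"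
      using avoid_twist[OF rhoG] by blast
    have s2: "g0 \<in> rf" unfolding rfeq using exact_pair[OF _ g0(1)] F2 g0 by auto
    have rg: "hmul rho g0 \<in> G" using mulG[OF rhoG g0(1)] .
    have s1: "hmul rho g0 \<in> re" unfolding reeq using exact_pair[OF _ rg] E2 g0 by auto
    have "hmul (A f w) (hmul rho g0) = hmul (A e w) g0"
    proof -
      have R: "A f w \<in> R" "A e w \<in> R" "minv (A f w) \<in> R" "g0 \<in> R" using afw aew minv[OF afw] g0 by auto
      have "hmul (A f w) (hmul rho g0) = hmul (hmul (A f w) rho) g0" using mul_assoc R rhoG by simp
      also have "hmul (A f w) rho = hmul (A e w) (hmul (A f w) (minv (A f w)))"
      proof -
        have "hmul (A f w) rho = hmul (hmul (A f w) (A e w)) (minv (A f w))" unfolding rho_def using mul_assoc R by simp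
        also have "\<dots> = hmul (hmul (A e w) (A f w)) (minv (A f w))" using mul_comm[of "A f w" "A e w"] R by simp
        also have "\<dots> = hmul (A e w) (hmul (A f w) (minv (A f w)))" using mul_assoc R by simp
        finally show ?thesis .
      qed
      finally show ?thesis using minv[OF afw] R by simp
    qed
    then show ?thesis using s1 s2 g0 rg by blast
  qed
  then obtain s1 s2 where s: "s1 \<in> re" "s2 \<in> rf" "s1 \<in> R" "s2 \<in> G" "hmul (A f w) s1 = hmul (A e w) s2" by blast
  define xw where "xw = hmul (neg s2) (minv (A f w))"
  have xwG: "xw \<in> G" unfolding xw_def using mulG[OF negG[OF s(4)] conjunct1[OF minv[OF afw]]] .
  have R4: "A f w \<in> R" "A e w \<in> R" "minv (A f w) \<in> R" "neg s2 \<in> R" "s2 \<in> R" using afw aew minv[OF afw] s by auto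
  have fxw: "hmul (A f w) xw = neg s2"
  proof -
    have "hmul (A f w) xw = hmul (hmul (A f w) (neg s2)) (minv (A f w))" unfolding xw_def using mul_assoc R4 by simp
    also have "\<dots> = hmul (hmul (neg s2) (A f w)) (minv (A f w))" using mul_comm[of "A f w" "neg s2"] R4 by simp
    also have "\<dots> = hmul (neg s2) (hmul (A f w) (minv (A f w)))" using mul_assoc R4 by simp
    finally show ?thesis using minv[OF afw] R4 by simp
  qed
  have exw: "hmul (A e w) xw = neg s1"
  proof -
    have "hmul (A e w) xw = hmul (hmul (A e w) (neg s2)) (minv (A f w))" unfolding xw_def using mul_assoc R4 by simp
    also have "hmul (A e w) (neg s2) = neg (hmul (A e w) s2)" using neg_mul[of s2 "A e w"] mul_comm[of "A e w" "neg s2"] mul_comm[of "A e w" s2] R4 by simp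
    also have "\<dots> = neg (hmul (A f w) s1)" using s by simp
    also have "\<dots> = hmul (neg s1) (A f w)" using neg_mul[of s1 "A f w"] mul_comm[of "A f w" s1] s R4 by simp
    also have "hmul (hmul (neg s1) (A f w)) (minv (A f w)) = hmul (neg s1) (hmul (A f w) (minv (A f w)))"
      using mul_assoc R4 s by simp
    finally show ?thesis using minv[OF afw] s by simp
  qed
  define x' where "x' = x(w := xw)"
  have x'G: "\<forall>i\<in>S. x' i \<in> G" using x xwG x'_def S'_def by auto
  have Sw: "S = insert w S'" using w S'_def by blast
  have "zero \<in> rsum A x' S j" if j: "j \<in> E" for j
  proof -
    have AjR: "\<forall>i\<in>S. A j i \<in> R" using AR j by blast
    have xeq: "rsum A x' S' j = rsum A x S' j" using fS' x'_def S'_def by (intro rs_cong) auto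
    have split: "rsum A x' S j = sp {hmul (A j w) xw} (rsum A x S' j)"
    proof -
      have p3: "\<forall>i\<in>insert w S'. A j i \<in> R \<and> x' i \<in> R" using AjR x'G w(1) unfolding S'_def by auto
      have wS': "w \<notin> S'" unfolding S'_def by simp
      have "rsum A x' (insert w S') j = sp {hmul (A j w) (x' w)} (rsum A x' S' j)"
        using rs_insert[of S' w A j x', OF fS' wS' p3] .
      then have "rsum A x' S j = sp {hmul (A j w) (x' w)} (rsum A x' S' j)" using Sw by simp
      then show ?thesis using xeq x'_def by simp
    qed
    have cl: "rsum A x S' j \<subseteq> R" using fS' AjR xR S'_def by (intro rs_closed) auto
    show ?thesis
    proof (cases "j = e \<or> j = f")
      case True
      then show ?thesis
      proof
        assume je: "j = e"
        have "zero \<in> hadd (neg s1) s1" using neg_zero_in[of s1] add_comm[of s1 "neg s1"] s by auto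
        then have "zero \<in> sp {neg s1} re" using s(1) unfolding setplus_def by blast
        then show ?thesis using split je exw re_def by simp
      next
        assume jf: "j = f"
        have "zero \<in> hadd (neg s2) s2" using neg_zero_in[of s2] add_comm[of s2 "neg s2"] s by auto
        then have "zero \<in> sp {neg s2} rf" using s(2) unfolding setplus_def by blast
        then show ?thesis using split jf fxw rf_def by simp
      qed
    next
      case False
      then have "A j w = zero" using w j by blast
      then have "rsum A x' S j = rsum A x S' j" unfolding split using cl xwG by (simp add: sp_zero)
      moreover have "j \<in> E'" using j False E'_def by blast
      moreover have "rsum A' x S' j = rsum A x S' j" using A'j[OF j] unfolding rsum_def by simp
      ultimately show ?thesis using x by auto
    qed
  qed
  then show ?thesis unfolding goodc_def using x'G by blast
qed

end

context mh begin

lemma circuit: "okc S E A \<Longrightarrow> goodc S E A"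
proof (induction "card S" arbitrary: S E A rule: less_induct)
  case less
  have IH: "\<And>S' E' A'. card S' < card S \<Longrightarrow> okc S' E' A' \<Longrightarrow> goodc S' E' A'" using less by blast
  have ok: "okc S E A" using less by blast
  have fS: "finite S" and fE: "finite E" and AR: "\<forall>j\<in>E. \<forall>i\<in>S. A j i \<in> R" and hall: "hallc A S E"
    using ok unfolding okc_def by auto
  show ?case
  proof (cases "E = {}")
    case True
    show ?thesis unfolding goodc_def using True unitG by (intro exI[where x="\<lambda>_. unit"]) simp
  next
    case E0: False
    show ?thesis
    proof (cases "\<exists>w\<in>S. \<forall>j\<in>E. A j w = zero")
      case True
      then obtain w where w: "w \<in> S" "\<forall>j\<in>E. A j w = zero" by blast
      have "card (S - {w}) < card S" using card_Diff1_less[OF fS w(1)] .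
      then have "goodc (S - {w}) E A" using IH stepA_ok[OF ok w] by blast
      then show ?thesis using stepA_good[OF ok w] by blast
    next
      case nA: False
      show ?thesis
      proof (cases "\<exists>w\<in>S. \<exists>e\<in>E. A e w \<noteq> zero \<and> (\<forall>j\<in>E. A j w \<noteq> zero \<longrightarrow> j = e)")
        case True
        then obtain w e where w: "w \<in> S" "e \<in> E" "A e w \<noteq> zero" "\<forall>j\<in>E. A j w \<noteq> zero \<longrightarrow> j = e" by blast
        have "card (S - {w}) < card S" using card_Diff1_less[OF fS w(1)] .
        then have "goodc (S - {w}) (E - {e}) A" using IH stepB_ok[OF ok w(1,2,4)] by blast
        then show ?thesis using stepB_good[OF ok w] by blast
      next
        case nB: False
        show ?thesis
        proof (cases "\<exists>e\<in>E. card (supp A S e) \<noteq> 3")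
          case True
          then obtain e where "e \<in> E" "card (supp A S e) \<noteq> 3" by blast
          then show ?thesis using stepC[OF ok _ _ IH] by blast
        next
          case False
          then have all3: "\<forall>j\<in>E. card (supp A S j) = 3" by blast
          define deg where "deg w = card {j\<in>E. w \<in> supp A S j}" for w
          have dc: "(\<Sum>w\<in>S. deg w) = (\<Sum>j\<in>E. card (supp A S j))"
            unfolding deg_def using double_count[OF fS fE] supp_sub by blast
          also have "\<dots> = (\<Sum>j\<in>E. 3)" using all3 by simp
          also have "\<dots> = 3 * card E" by simp
          finally have dc3: "(\<Sum>w\<in>S. deg w) = 3 * card E" .
          have "card E + 1 \<le> card (NN (supp A S) E)" using hall E0 unfolding hallc_def by blast
          also have "\<dots> \<le> card S" using fS by (intro card_mono) (auto simp: NN_def supp_def)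
          finally have cES: "card E + 1 \<le> card S" .
          have "\<exists>w\<in>S. deg w < 3"
          proof (rule ccontr)
            assume "\<not> ?thesis"
            then have "\<forall>w\<in>S. 3 \<le> deg w" by auto
            then have "(\<Sum>w\<in>S. (3::nat)) \<le> (\<Sum>w\<in>S. deg w)" by (intro sum_mono) auto
            then have "3 * card S \<le> 3 * card E" using dc3 by simp
            then show False using cES by simp
          qed
          then obtain w where w: "w \<in> S" "deg w < 3" by blast
          have fdeg: "finite {j\<in>E. w \<in> supp A S j}" using fE by simp
          have wsupp: "w \<in> supp A S j \<longleftrightarrow> A j w \<noteq> zero" for j using w(1) unfolding supp_def by simp
          have d0: "deg w \<noteq> 0"
          proof
            assume "deg w = 0"
            then have "{j\<in>E. w \<in> supp A S j} = {}" using fdeg deg_def by simp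
            then show False using nA w(1) wsupp by blast
          qed
          have d1: "deg w \<noteq> 1"
          proof
            assume "deg w = 1"
            then obtain e where e: "{j\<in>E. w \<in> supp A S j} = {e}" using deg_def by (metis card_1_singletonE)
            then have "e \<in> E" "A e w \<noteq> zero" "\<forall>j\<in>E. A j w \<noteq> zero \<longrightarrow> j = e" using wsupp by blast+
            then show False using nB w(1) by blast
          qed
          have "deg w = 2" using d0 d1 w(2) by linarith
          then obtain e f where ef: "{j\<in>E. w \<in> supp A S j} = {e, f}" "e \<noteq> f"
            using deg_def by (metis card_2_iff)
          have efE: "e \<in> E" "f \<in> E" using ef by blast+
          have iff: "\<forall>j\<in>E. A j w \<noteq> zero \<longleftrightarrow> (j = e \<or> j = f)" using ef wsupp by blast
          show ?thesis using stepD[OF ok all3 w(1) efE ef(2) iff IH] .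
        qed
      qed
    qed
  qed
qed

lemma fetv: assumes kn: "k < n" and AR: "\<forall>j<k. \<forall>i<n. A j i \<in> R"
  shows "\<exists>x. (\<forall>i<n. x i \<in> R) \<and> (\<exists>i<n. x i \<noteq> zero) \<and> (\<forall>j<k. zero \<in> lin_form hadd hmul zero n (A j) x)"
proof -
  define C where "C = {..<n}"
  define Rr where "Rr S = {j\<in>{..<k}. supp A S j \<noteq> {}}" for S
  define P where "P S = (S \<subseteq> C \<and> S \<noteq> {} \<and> card (Rr S) < card S)" for S
  have fRr: "finite (Rr S)" for S unfolding Rr_def by simp
  have "P C"
  proof -
    have "card (Rr C) \<le> card {..<k}" unfolding Rr_def by (intro card_mono) auto
    then show ?thesis unfolding P_def C_def using kn by auto
  qed
  then obtain S where PS: "P S" and minS: "\<forall>S'. P S' \<longrightarrow> card S \<le> card S'"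
    using ex_has_least_nat[of P C card] by blast
  have SC: "S \<subseteq> C" and S0: "S \<noteq> {}" and cS: "card (Rr S) < card S" using PS P_def by auto
  have fC: "finite C" unfolding C_def by simp
  have fS: "finite S" using finite_subset[OF SC fC] .
  have hallS: "hallc A S (Rr S)"
    unfolding hallc_def
  proof (intro allI impI)
    fix J assume J': "J \<subseteq> Rr S" "J \<noteq> {}"
    then have J: "J \<subseteq> Rr S \<and> J \<noteq> {}" by blast
    define N where "N = NN (supp A S) J"
    have NS: "N \<subseteq> S" unfolding N_def NN_def supp_def by blast
    have JR: "J \<subseteq> Rr S" using J by blast
    have fJ: "finite J" using finite_subset[OF JR fRr] .
    have cJ: "card J \<le> card (Rr S)" using card_mono[OF fRr JR] .
    have fN: "finite N" using finite_subset[OF NS fS] .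
    have N0: "N \<noteq> {}" using J unfolding N_def NN_def Rr_def by blast
    show "card J + 1 \<le> card (NN (supp A S) J)"
    proof (cases "S - N = {}")
      case True
      then have "N = S" using NS by blast
      then show ?thesis using cJ cS N_def by simp
    next
      case False
      have "S - N \<subset> S" using N0 NS by blast
      then have lt: "card (S - N) < card S" using psubset_card_mono[OF fS] by blast
      have "\<not> P (S - N)"
      proof
        assume "P (S - N)"
        then have "card S \<le> card (S - N)" using minS by blast
        then show False using lt by simp
      qed
      then have c1: "card (S - N) \<le> card (Rr (S - N))" using False SC P_def by auto
      have "Rr (S - N) \<subseteq> Rr S - J"
      proof
        fix j assume j: "j \<in> Rr (S - N)"
        then have "j \<in> Rr S" unfolding Rr_def supp_def by auto
        moreover have "j \<notin> J"
        proof
          assume "j \<in> J"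
          then have "supp A S j \<subseteq> N" unfolding N_def NN_def by blast
          then have "supp A (S - N) j = {}" unfolding supp_def by blast
          then show False using j Rr_def by simp
        qed
        ultimately show "j \<in> Rr S - J" by blast
      qed
      then have "card (Rr (S - N)) \<le> card (Rr S - J)" using card_mono[OF finite_Diff[OF fRr]] by blast
      also have "\<dots> = card (Rr S) - card J" using card_Diff_subset[OF fJ JR] .
      finally have c2: "card (S - N) \<le> card (Rr S) - card J" using c1 by simp
      have "card (S - N) = card S - card N" using card_Diff_subset[OF fN NS] .
      then have "card S - card N \<le> card (Rr S) - card J" using c2 by simp
      moreover have "card N \<le> card S" using card_mono[OF fS NS] .
      ultimately have "card J + 1 \<le> card N" using cJ cS by linarith
      then show ?thesis unfolding N_def .
    qed
  qed
  have okS: "okc S (Rr S) A" unfolding okc_def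
    using fS fRr AR SC hallS unfolding Rr_def C_def by auto
  obtain x where x: "\<forall>i\<in>S. x i \<in> G" "\<forall>j\<in>Rr S. zero \<in> rsum A x S j"
    using circuit[OF okS] goodc_def by blast
  define x' where "x' i = (if i \<in> S then x i else zero)" for i
  have x'R: "\<forall>i<n. x' i \<in> R" using x x'_def by auto
  obtain i0 where i0: "i0 \<in> S" using S0 by blast
  then have "i0 < n" "x' i0 \<noteq> zero" using SC C_def x x'_def by auto
  then have nz: "\<exists>i<n. x' i \<noteq> zero" by blast
  have "zero \<in> lin_form hadd hmul zero n (A j) x'" if j: "j < k" for j
  proof -
    let ?f = "\<lambda>i. hmul (A j i) (x' i)"
    have fR: "?f ` {..<n} \<subseteq> R" using AR j x'R by auto
    have "lin_form hadd hmul zero n (A j) x' = hs (map ?f (filter (\<lambda>i. A j i \<noteq> zero) [0..<n]))"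
      unfolding lin_form_def by simp
    also have "\<dots> = ssum ?f (set (filter (\<lambda>i. A j i \<noteq> zero) [0..<n]))"
      using fR by (intro ss_list) auto
    also have "set (filter (\<lambda>i. A j i \<noteq> zero) [0..<n]) = {i\<in>{..<n}. A j i \<noteq> zero}" by auto
    also have "ssum ?f {i\<in>{..<n}. A j i \<noteq> zero} = ssum ?f {..<n}"
    proof (rule ss_zero_terms[symmetric])
      show "finite {..<n}" by simp
      show "{i\<in>{..<n}. A j i \<noteq> zero} \<subseteq> {..<n}" by blast
      show "?f i = zero" if "i \<in> {..<n} - {i\<in>{..<n}. A j i \<noteq> zero}" for i
        using that x'R by auto
      show "?f ` {..<n} \<subseteq> R" using fR .
    qed
    also have "ssum ?f {..<n} = ssum ?f S"
    proof (rule ss_zero_terms)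
      show "finite {..<n}" by simp
      show "S \<subseteq> {..<n}" using SC C_def by simp
      show "?f i = zero" if "i \<in> {..<n} - S" for i
        using that x'_def AR j by auto
      show "?f ` {..<n} \<subseteq> R" using fR .
    qed
    also have "ssum ?f S = rsum A x S j" unfolding rsum_def using fS x'_def by (intro ss_cong) auto
    finally have eq: "lin_form hadd hmul zero n (A j) x' = rsum A x S j" .
    show ?thesis
    proof (cases "j \<in> Rr S")
      case True then show ?thesis using eq x by simp
    next
      case False
      then have "supp A S j = {}" using j Rr_def by simp
      moreover have "rsum A x S j = ssum (\<lambda>i. hmul (A j i) (x i)) (supp A S j)"
        using fS AR j SC C_def x by (intro rs_supp) auto
      ultimately show ?thesis using eq by simp
    qed
  qed
  then show ?thesis using x'R nz by blast
qed

end

lemma FETV: assumes "massouros R hadd hmul zero unit H phi" shows "FETVINS R hadd hmul zero"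
proof -
  interpret mh R hadd hmul zero unit H phi by (rule mh.intro) (rule assms)
  show ?thesis unfolding FETVINS_def using fetv by blast
qed

theorem mainTheorem1:
  fixes R :: "'a set" and hadd :: "'a \<Rightarrow> 'a \<Rightarrow> 'a set" and hmul :: "'a \<Rightarrow> 'a \<Rightarrow> 'a"
    and zero unit :: 'a and H :: "('b, 'c) monoid_scheme" and phi :: "'a \<Rightarrow> 'b"
  assumes "massouros R hadd hmul zero unit H phi"
  shows "FETVINS R hadd hmul zero"
  using FETV[OF assms] .

end
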